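(* Let $G$ be a connected simple graph with maximum degree at most $3$ and minimum degree at least $2$, in which no two adjacent vertices both have degree $3$. Let $M_1,M_2$ be disjoint matchings of $G$ such that $|M_1\cup M_2|$ is maximum over all pairs of disjoint matchings, and, subject to this, such that $G_{M_1,M_2}$ has the minimum number of connected components. Let $H$ be the graph with vertex set $E(G)\setminus(M_1\cup M_2)$ in which two distinct edges are adjacent if and only if their distance in $G$ is at most $2$. If $u_1u_2u_3$ is a component of $G_{M_1,M_2}$ that is a path $P_3$, then there is no cycle of $H$ containing both vertices $u_1u_2$ and $u_2u_3$.
   Context: $G_{M_1,M_2}$ denotes the subgraph of $G$ induced by the edge set $E(G)\setminus(M_1\cup M_2)$. $P_k$ denotes a path on $k$ vertices. The distance between two edges of $G$ is the distance between the corresponding vertices in the line graph of $G$. *)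

theory Defs
  imports Main
begin

definition simple_graph :: "'a set \<Rightarrow> 'a set set \<Rightarrow> bool" where
  "simple_graph V E \<longleftrightarrow> finite V \<and> (\<forall>e\<in>E. e \<subseteq> V \<and> card e = 2)"

definition degree :: "'a set set \<Rightarrow> 'a \<Rightarrow> nat" where
  "degree E v = card {e\<in>E. v \<in> e}"

definition adj :: "'a set set \<Rightarrow> 'a \<Rightarrow> 'a \<Rightarrow> bool" where
  "adj E u v \<longleftrightarrow> {u, v} \<in> E"

definition reach :: "'a set set \<Rightarrow> 'a \<Rightarrow> 'a \<Rightarrow> bool" where
  "reach E = (adj E)\<^sup>*\<^sup>*"

definition connected_graph :: "'a set \<Rightarrow> 'a set set \<Rightarrow> bool" where
  "connected_graph V E \<longleftrightarrow> (\<forall>u\<in>V. \<forall>v\<in>V. reach E u v)"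

definition components :: "'a set \<Rightarrow> 'a set set \<Rightarrow> 'a set set" where
  "components V E = {{v\<in>V. reach E u v} | u. u \<in> V}"

definition matching :: "'a set set \<Rightarrow> 'a set set \<Rightarrow> bool" where
  "matching E M \<longleftrightarrow> M \<subseteq> E \<and> (\<forall>e\<in>M. \<forall>f\<in>M. e \<noteq> f \<longrightarrow> e \<inter> f = {})"

text \<open>G_{M1,M2}: subgraph induced by the edge set E - (M1 \<union> M2)
  (vertex set = the vertices covered by these edges).\<close>
definition rem_edges :: "'a set set \<Rightarrow> 'a set set \<Rightarrow> 'a set set \<Rightarrow> 'a set set" where
  "rem_edges E M1 M2 = E - (M1 \<union> M2)"

definition rem_ncomp :: "'a set set \<Rightarrow> 'a set set \<Rightarrow> 'a set set \<Rightarrow> nat" where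
  "rem_ncomp E M1 M2 = card (components (\<Union>(rem_edges E M1 M2)) (rem_edges E M1 M2))"

definition line_adj :: "'a set set \<Rightarrow> 'a set \<Rightarrow> 'a set \<Rightarrow> bool" where
  "line_adj E e f \<longleftrightarrow> e \<in> E \<and> f \<in> E \<and> e \<noteq> f \<and> e \<inter> f \<noteq> {}"

definition edge_dist_le :: "'a set set \<Rightarrow> 'a set \<Rightarrow> 'a set \<Rightarrow> nat \<Rightarrow> bool" where
  "edge_dist_le E e f k \<longleftrightarrow> (\<exists>j\<le>k. (line_adj E ^^ j) e f)"

definition H_adj :: "'a set set \<Rightarrow> 'a set set \<Rightarrow> 'a set set \<Rightarrow> 'a set \<Rightarrow> 'a set \<Rightarrow> bool" where
  "H_adj E M1 M2 e f \<longleftrightarrow> e \<in> rem_edges E M1 M2 \<and> f \<in> rem_edges E M1 M2 \<and> e \<noteq> f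
     \<and> edge_dist_le E e f 2"

definition is_cycle :: "('b \<Rightarrow> 'b \<Rightarrow> bool) \<Rightarrow> 'b list \<Rightarrow> bool" where
  "is_cycle A xs \<longleftrightarrow> length xs \<ge> 3 \<and> distinct xs \<and>
     (\<forall>i<length xs. A (xs ! i) (xs ! ((i + 1) mod length xs)))"

end

theory Submission
  imports Defs
begin

lemma adj_sym: "adj R u v = adj R v u"
  by (simp add: adj_def insert_commute)

lemma reach_refl[simp]: "reach R u u"
  by (simp add: reach_def)

lemma reach_edge: "{u, v} \<in> R \<Longrightarrow> reach R u v"
  by (simp add: reach_def adj_def r_into_rtranclp)

lemma reach_trans: "reach R u v \<Longrightarrow> reach R v w \<Longrightarrow> reach R u w"
  unfolding reach_def by (rule rtranclp_trans)

lemma reach_sym: "reach R u v \<Longrightarrow> reach R v u"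
  unfolding reach_def
proof (induction rule: rtranclp_induct)
  case base then show ?case by simp
next
  case (step y z)
  then have "adj R z y" using adj_sym by metis
  then show ?case using step(3) by (rule converse_rtranclp_into_rtranclp)
qed

lemma reach_mono: assumes "R \<subseteq> R'" "reach R u v" shows "reach R' u v"
  using assms(2) unfolding reach_def
proof (induction rule: rtranclp_induct)
  case base then show ?case by simp
next
  case (step y z)
  then have "adj R' y z" using assms(1) by (auto simp: adj_def)
  then show ?case using step by (meson rtranclp.rtrancl_into_rtrancl)
qed

lemma reach_closed:
  assumes "reach F u v" "\<forall>e\<in>F. e \<inter> S \<noteq> {} \<longrightarrow> e \<subseteq> S" "u \<in> S"
  shows "v \<in> S"
  using assms(1) unfolding reach_def
proof (induction rule: rtranclp_induct)
  case base then show ?case using assms by simp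
next
  case (step y z)
  then have e: "{y,z} \<in> F" by (simp add: adj_def)
  have "y \<in> S" using step(3) .
  then have "{y,z} \<inter> S \<noteq> {}" by blast
  moreover have "{y,z} \<inter> S \<noteq> {} \<longrightarrow> {y,z} \<subseteq> S" using assms(2) e by (rule bspec)
  ultimately have "{y,z} \<subseteq> S" by (rule rev_mp)
  then show ?case by simp
qed

lemma reach_restrict:
  assumes "reach (F0 \<union> F1) u v" "\<forall>w. reach F0 u w \<longrightarrow> (\<forall>e\<in>F1. w \<notin> e)"
  shows "reach F0 u v"
  using assms(1) unfolding reach_def
proof (induction rule: rtranclp_induct)
  case base then show ?case by simp
next
  case (step y z)
  then have "{y,z} \<in> F0 \<union> F1" by (simp add: adj_def)
  moreover have "\<forall>e\<in>F1. y \<notin> e" using assms(2) step(3) by (simp add: reach_def)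
  ultimately have "{y,z} \<in> F0" by blast
  then show ?case using step(3) by (simp add: adj_def rtranclp.rtrancl_into_rtrancl)
qed

lemma reach_Union:
  assumes "reach R u v" "u \<in> \<Union>R" shows "v \<in> \<Union>R"
  using reach_closed[OF assms(1), of "\<Union>R"] assms(2) by blast

definition ncomp :: "'a set set \<Rightarrow> nat" where
  "ncomp R = card (components (\<Union>R) R)"

definition cls :: "'a set set \<Rightarrow> 'a \<Rightarrow> 'a set" where
  "cls R u = {v\<in>\<Union>R. reach R u v}"

lemma components_image: "components (\<Union>R) R = cls R ` (\<Union>R)"
  by (auto simp: components_def cls_def)

lemma finite_components:
  assumes "finite R" "\<forall>e\<in>R. finite e"
  shows "finite (components (\<Union>R) R)"
  using assms by (simp add: components_image)

lemma cls_sub: "cls R u \<subseteq> \<Union>R" by (auto simp: cls_def)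

lemma ncomp_iso:
  assumes fin: "finite R" "\<forall>e\<in>R. finite e"
    and st: "s \<noteq> t" "s \<notin> \<Union>R" "t \<notin> \<Union>R"
  shows "ncomp (insert {s,t} R) = ncomp R + 1"
proof -
  let ?R = "insert {s,t} R"
  have U: "\<Union>?R = insert s (insert t (\<Union>R))" by auto
  have c1: "cls ?R u = cls R u" if "u \<in> \<Union>R" for u
  proof (rule equalityI)
    show "cls ?R u \<subseteq> cls R u"
    proof
      fix v assume "v \<in> cls ?R u"
      then have r: "reach ({{s,t}} \<union> R) u v" and v: "v \<in> \<Union>?R" by (auto simp: cls_def)
      have "reach R u v"
        apply (rule reach_restrict[of R "{{s,t}}"])
        using r apply (simp add: Un_commute)
        using reach_Union[OF _ that] st by blast
      then show "v \<in> cls R u" using reach_Union[OF _ that] by (simp add: cls_def)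
    qed
  next
    show "cls R u \<subseteq> cls ?R u"
      using reach_mono[of R ?R] by (auto simp: cls_def)
  qed
  have c2: "cls ?R u = {s,t}" if "u \<in> {s,t}" for u
  proof (rule equalityI)
    show "cls ?R u \<subseteq> {s,t}"
    proof
      fix v assume "v \<in> cls ?R u"
      then have r: "reach ?R u v" by (auto simp: cls_def)
      show "v \<in> {s,t}"
        apply (rule reach_closed[OF r])
        using st that by auto
    qed
  next
    have "reach ?R s t" by (rule reach_edge) simp
    then have "reach ?R u s" "reach ?R u t" using that reach_sym by auto
    then show "{s,t} \<subseteq> cls ?R u" by (auto simp: cls_def)
  qed
  have "components (\<Union>?R) ?R = insert {s,t} (components (\<Union>R) R)"
  proof -
    have i1: "cls ?R ` (\<Union>R) = cls R ` (\<Union>R)" using c1 by (rule image_cong[OF refl])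
    have "components (\<Union>?R) ?R = insert (cls ?R s) (insert (cls ?R t) (cls ?R ` (\<Union>R)))"
      unfolding components_image by (simp add: U)
    also have "\<dots> = insert {s,t} (cls R ` (\<Union>R))" using i1 c2 by simp
    finally show ?thesis unfolding components_image .
  qed
  moreover have "{s,t} \<notin> components (\<Union>R) R"
  proof
    assume "{s,t} \<in> components (\<Union>R) R"
    then obtain u where "{s,t} = cls R u" unfolding components_image by blast
    then have "s \<in> \<Union>R" using cls_sub[of R u] by auto
    then show False using st by simp
  qed
  ultimately show ?thesis
    unfolding ncomp_def using finite_components[OF fin] by simp
qed

lemma reach_pend_aux:
  assumes "reach (insert {s,t} R) u v" "u \<in> \<Union>R" "s \<notin> \<Union>R" "t \<in> \<Union>R"
  shows "reach R u v \<or> (v = s \<and> reach R u t)"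
  using assms(1) unfolding reach_def
proof (induction rule: rtranclp_induct)
  case base then show ?case by simp
next
  case (step y z)
  have e: "{y,z} \<in> insert {s,t} R" using step(2) by (simp add: adj_def)
  have st: "s \<noteq> t" using assms by blast
  show ?case
  proof (cases "{y,z} \<in> R")
    case True
    then have "y \<noteq> s" using assms(3) by blast
    then have "(adj R)\<^sup>*\<^sup>* u y" using step(3) by simp
    moreover have "adj R y z" using True by (simp add: adj_def)
    ultimately show ?thesis by (meson rtranclp.rtrancl_into_rtrancl)
  next
    case False
    then have "{y,z} = {s,t}" using e by simp
    then have "(y = s \<and> z = t) \<or> (y = t \<and> z = s)" by (metis doubleton_eq_iff)
    then show ?thesis
    proof
      assume yz: "y = s \<and> z = t"
      have "\<not> reach R u s" using reach_Union[of R u s] assms by blast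
      then show ?thesis using step(3) yz by (simp add: reach_def)
    next
      assume yz: "y = t \<and> z = s"
      then show ?thesis using step(3) st by (simp add: reach_def)
    qed
  qed
qed

lemma ncomp_pend:
  assumes fin: "finite R" "\<forall>e\<in>R. finite e"
    and st: "s \<notin> \<Union>R" "t \<in> \<Union>R"
  shows "ncomp (insert {s,t} R) = ncomp R"
proof -
  let ?R = "insert {s,t} R"
  define f where "f K = (if t \<in> K then insert s K else K)" for K
  have U: "\<Union>?R = insert s (\<Union>R)" using st by auto
  have rst: "reach ?R s t" by (rule reach_edge) simp
  have c1: "cls ?R u = f (cls R u)" if u: "u \<in> \<Union>R" for u
  proof (rule equalityI)
    show "cls ?R u \<subseteq> f (cls R u)"
    proof
      fix v assume "v \<in> cls ?R u"
      then have "reach ?R u v" by (simp add: cls_def)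
      from reach_pend_aux[OF this u st]
      show "v \<in> f (cls R u)"
        using reach_Union[OF _ u] st by (auto simp: f_def cls_def)
    qed
  next
    show "f (cls R u) \<subseteq> cls ?R u"
    proof
      fix v assume v: "v \<in> f (cls R u)"
      show "v \<in> cls ?R u"
      proof (cases "v \<in> cls R u")
        case True then show ?thesis using reach_mono[of R ?R] by (auto simp: cls_def)
      next
        case False
        then have "v = s" "reach R u t" using v st by (auto simp: f_def cls_def split: if_splits)
        then have "reach ?R u t" using reach_mono[of R ?R] by auto
        then have "reach ?R u v" using reach_trans rst \<open>v = s\<close> reach_sym by metis
        then show ?thesis using \<open>v = s\<close> by (simp add: cls_def)
      qed
    qed
  qed
  have rs: "reach ?R s v \<longleftrightarrow> reach ?R t v" for v
    by (meson reach_trans reach_sym rst)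
  have cs: "cls ?R s = cls ?R t"
    unfolding cls_def using rs by simp
  have "components (\<Union>?R) ?R = cls ?R ` insert s (insert t (\<Union>R))"
    unfolding components_image by simp
  also have "\<dots> = cls ?R ` (\<Union>R)"
    using cs st(2) by (simp add: insert_absorb)
  also have "\<dots> = f ` (cls R ` (\<Union>R))" using c1 by (simp add: image_image)
  finally have eq: "components (\<Union>?R) ?R = f ` components (\<Union>R) R"
    unfolding components_image .
  have fK: "f K - {s} = K" if "K \<subseteq> \<Union>R" for K
    using that st(1) by (auto simp: f_def)
  have inj: "inj_on f (components (\<Union>R) R)"
  proof (rule inj_onI)
    fix K K' assume "K \<in> components (\<Union>R) R" "K' \<in> components (\<Union>R) R" "f K = f K'"
    moreover have "K \<subseteq> \<Union>R" "K' \<subseteq> \<Union>R" using calculation(1,2) cls_sub[of R]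
      unfolding components_image by blast+
    ultimately show "K = K'" using fK by metis
  qed
  show ?thesis unfolding ncomp_def eq by (rule card_image[OF inj])
qed

lemma reach_leaf:
  assumes ex: "{e\<in>F. x\<in>e} = {{x,x1}}" and r: "reach F x w"
  shows "w = x \<or> reach (F - {{x,x1}}) x1 w"
  using r unfolding reach_def
proof (induction rule: rtranclp_induct)
  case base then show ?case by simp
next
  case (step y z)
  have e: "{y,z} \<in> F" using step(2) by (simp add: adj_def)
  show ?case
  proof (cases "{y,z} = {x,x1}")
    case True
    then have "z = x \<or> z = x1" by (metis doubleton_eq_iff)
    then show ?thesis by auto
  next
    case False
    have yx: "y \<noteq> x"
    proof
      assume "y = x"
      then have "{y,z} \<in> {e\<in>F. x\<in>e}" using e by simp
      then show False using ex False by simp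
    qed
    then have r': "(adj (F - {{x,x1}}))\<^sup>*\<^sup>* x1 y" using step(3) by (simp add: reach_def)
    have "adj (F - {{x,x1}}) y z" using e False by (simp add: adj_def)
    then show ?thesis using r' by (simp add: reach_def rtranclp.rtrancl_into_rtrancl)
  qed
qed

lemma degree1_E:
  assumes "degree F x = 1" "\<forall>e\<in>F. card e = 2"
  obtains x1 where "{e\<in>F. x\<in>e} = {{x,x1}}" "x1 \<noteq> x" "{x,x1} \<in> F"
proof -
  obtain e where e: "{e\<in>F. x\<in>e} = {e}" using assms(1) unfolding degree_def
    by (meson card_1_singletonE)
  then have "e \<in> F" "x \<in> e" by auto
  then obtain p q where pq: "e = {p,q}" "p \<noteq> q" using assms(2) by (meson card_2_iff)
  then obtain x1 where "e = {x,x1}" "x1 \<noteq> x" using \<open>x \<in> e\<close> by blast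
  then show ?thesis using that e \<open>e \<in> F\<close> by auto
qed

lemma three_ends:
  assumes "finite F" "\<forall>e\<in>F. card e = 2" "\<forall>v. degree F v \<le> 2"
    "degree F x = 1" "degree F y = 1" "degree F z = 1"
    "x \<noteq> y" "x \<noteq> z" "y \<noteq> z" "reach F x y" "reach F x z"
  shows False
  using assms
proof (induction "card F" arbitrary: F x y z rule: less_induct)
  case less
  obtain x1 where ex: "{e\<in>F. x\<in>e} = {{x,x1}}" and x1: "x1 \<noteq> x" "{x,x1} \<in> F"
    using degree1_E[OF less.prems(4) less.prems(2)] by blast
  have fin1: "finite {e\<in>F. x1\<in>e}" using less.prems(1) by simp
  have ein: "{x,x1} \<in> {e\<in>F. x1\<in>e}" using x1 by simp
  show False
  proof (cases "degree F x1 = 1")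
    case True
    then have ex1: "{e\<in>F. x1\<in>e} = {{x,x1}}" using ein fin1 unfolding degree_def
      by (metis card_1_singletonE singletonD)
    have cl: "\<forall>e\<in>F. e \<inter> {x,x1} \<noteq> {} \<longrightarrow> e \<subseteq> {x,x1}"
    proof (intro ballI impI)
      fix e assume "e \<in> F" "e \<inter> {x,x1} \<noteq> {}"
      then have "e \<in> {e\<in>F. x\<in>e} \<or> e \<in> {e\<in>F. x1\<in>e}" by blast
      then show "e \<subseteq> {x,x1}" using ex ex1 by auto
    qed
    have "y \<in> {x,x1}" "z \<in> {x,x1}"
      using reach_closed[OF less.prems(10) cl] reach_closed[OF less.prems(11) cl] by auto
    then show False using less.prems(7-9) by auto
  next
    case False
    have "degree F x1 \<ge> 1" using ein fin1 unfolding degree_def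
      by (metis One_nat_def Suc_leI card_gt_0_iff empty_iff)
    then have d2: "degree F x1 = 2" using False less.prems(3) by (metis le_antisym not_less_eq_eq One_nat_def numeral_2_eq_2 le_SucE)
    define F' where "F' = F - {{x,x1}}"
    have cF: "card F' < card F" unfolding F'_def using x1 less.prems(1)
      by (meson card_Diff1_less)
    have dF': "degree F' v = (if v \<in> {x,x1} then degree F v - 1 else degree F v)" for v
    proof -
      have "{e\<in>F'. v\<in>e} = {e\<in>F. v\<in>e} - {{x,x1}}" unfolding F'_def by auto
      moreover have "finite {e\<in>F. v\<in>e}" using less.prems(1) by simp
      ultimately show ?thesis unfolding degree_def using x1 by auto
    qed
    have yx1: "y \<noteq> x1" "z \<noteq> x1" using d2 less.prems(5,6) by auto
    have r1: "reach F' x1 y" "reach F' x1 z"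
      using reach_leaf[OF ex less.prems(10)] reach_leaf[OF ex less.prems(11)] less.prems(7,8)
      unfolding F'_def by auto
    show False
      apply (rule less.hyps[OF cF, of x1 y z])
      using less.prems(1) apply (simp add: F'_def)
      using less.prems(2) apply (simp add: F'_def)
      using less.prems(3) dF' apply (metis diff_le_self le_trans)
      using dF' d2 apply simp
      using dF' less.prems(5,7) yx1 apply simp
      using dF' less.prems(6,8) yx1 apply simp
      using yx1 less.prems(9) r1 by auto
  qed
qed

lemma rem_sym: "rem_edges E A B = rem_edges E B A"
  by (auto simp: rem_edges_def)

lemma rem_ncomp_eq: "rem_ncomp E A B = ncomp (rem_edges E A B)"
  by (simp add: rem_ncomp_def ncomp_def)

lemma match_uniq: "matching E A \<Longrightarrow> e \<in> A \<Longrightarrow> f \<in> A \<Longrightarrow> v \<in> e \<Longrightarrow> v \<in> f \<Longrightarrow> e = f"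
  unfolding matching_def by blast

definition miss :: "'a set set \<Rightarrow> 'a \<Rightarrow> bool" where
  "miss B x \<longleftrightarrow> (\<forall>e\<in>B. x \<notin> e)"

definition near :: "'a set set \<Rightarrow> 'a set \<Rightarrow> 'a set \<Rightarrow> bool" where
  "near E e f \<longleftrightarrow> e \<inter> f \<noteq> {} \<or> (\<exists>g\<in>E. g \<inter> e \<noteq> {} \<and> g \<inter> f \<noteq> {})"

lemma near_sym: "near E e f = near E f e"
  unfolding near_def by blast

lemma H_adj_near:
  assumes "H_adj E A B e f"
  shows "e \<in> rem_edges E A B" "f \<in> rem_edges E A B" "e \<noteq> f" "near E e f"
proof -
  show "e \<in> rem_edges E A B" "f \<in> rem_edges E A B" "e \<noteq> f" using assms by (auto simp: H_adj_def)
  obtain j where j: "j \<le> 2" "(line_adj E ^^ j) e f"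
    using assms unfolding H_adj_def edge_dist_le_def by blast
  have "j = 0 \<or> j = 1 \<or> j = 2" using j(1) by auto
  then show "near E e f"
  proof (elim disjE)
    assume "j = 0" then show ?thesis using j \<open>e \<noteq> f\<close> by simp
  next
    assume "j = 1" then have "line_adj E e f" using j by (auto simp: OO_def)
    then show ?thesis unfolding near_def line_adj_def by blast
  next
    assume "j = 2" then have "(line_adj E ^^ Suc (Suc 0)) e f" using j by (simp add: numeral_2_eq_2)
    then obtain g where "line_adj E e g" "line_adj E g f" by (auto simp: relpowp_Suc_left OO_def)
    then show ?thesis unfolding near_def line_adj_def by blast
  qed
qed

lemma cycle_nbrs:
  assumes cyc: "is_cycle A xs" and z: "z \<in> set xs"
  shows "\<exists>z1 z2. z1 \<in> set xs \<and> z2 \<in> set xs \<and> z1 \<noteq> z2 \<and> z1 \<noteq> z \<and> z2 \<noteq> z \<and> A z z1 \<and> A z2 z"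
proof -
  let ?n = "length xs"
  have n: "?n \<ge> 3" "distinct xs" and ad: "\<forall>i<?n. A (xs ! i) (xs ! ((i + 1) mod ?n))"
    using cyc unfolding is_cycle_def by auto
  obtain i where i: "i < ?n" "xs ! i = z" using z by (meson in_set_conv_nth)
  define k where "k = (if i = ?n - 1 then 0 else i + 1)"
  define j where "j = (if i = 0 then ?n - 1 else i - 1)"
  have k: "k < ?n" "k = (i + 1) mod ?n" using i n unfolding k_def by (auto simp: mod_if)
  have j: "j < ?n \<and> (j + 1) mod ?n = i"
  proof (cases "i = 0")
    case True
    then have "j = ?n - 1" unfolding j_def by simp
    moreover have "?n - 1 + 1 = ?n" using n(1) by simp
    ultimately show ?thesis using True n(1) by simp
  next
    case False
    then have "j + 1 = i" unfolding j_def by simp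
    then show ?thesis using i(1) by simp
  qed
  note j = conjunct1[OF j] conjunct2[OF j]
  have kj: "k \<noteq> j" "k \<noteq> i" "j \<noteq> i" using i n unfolding k_def j_def by (auto split: if_splits)
  have d: "xs ! k \<noteq> xs ! j" "xs ! k \<noteq> xs ! i" "xs ! j \<noteq> xs ! i"
    using kj k(1) j(1) i(1) n(2) by (simp_all add: nth_eq_iff_index_eq)
  have a1: "A z (xs ! k)" using ad i k by metis
  have a2: "A (xs ! j) z" using ad i j by metis
  show ?thesis
    apply (rule exI[of _ "xs ! k"], rule exI[of _ "xs ! j"])
    using d a1 a2 k(1) j(1) i by auto
qed

lemma flip:
  fixes E A B :: "'a set set" and v :: 'a
  assumes mA: "matching E A" and mB: "matching E B" and d: "A \<inter> B = {}"
    and two: "\<forall>e\<in>E. card e = 2"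
  defines "K \<equiv> {z. reach (A \<union> B) v z}"
  defines "A' \<equiv> {e\<in>A. e \<inter> K = {}} \<union> {e\<in>B. e \<inter> K \<noteq> {}}"
  defines "B' \<equiv> {e\<in>B. e \<inter> K = {}} \<union> {e\<in>A. e \<inter> K \<noteq> {}}"
  shows "matching E A'" "matching E B'" "A' \<inter> B' = {}" "A' \<union> B' = A \<union> B"
    "\<And>e. e \<in> A \<union> B \<Longrightarrow> e \<inter> K \<noteq> {} \<Longrightarrow> e \<subseteq> K"
proof -
  have sub: "A \<subseteq> E" "B \<subseteq> E" using mA mB by (auto simp: matching_def)
  show cl: "e \<subseteq> K" if "e \<in> A \<union> B" "e \<inter> K \<noteq> {}" for e
  proof -
    have "card e = 2" using two sub that(1) by blast
    then obtain p q where pq: "e = {p,q}" by (meson card_2_iff)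
    have r: "reach (A \<union> B) p q" "reach (A \<union> B) q p" using that(1) pq reach_edge reach_sym by metis+
    show ?thesis
    proof (cases "p \<in> K")
      case True then have "q \<in> K" using r unfolding K_def by (auto intro: reach_trans)
      then show ?thesis using pq True by simp
    next
      case False then have "q \<in> K" using that(2) pq by auto
      then have "p \<in> K" using r unfolding K_def by (auto intro: reach_trans)
      then show ?thesis using False by simp
    qed
  qed
  have mA': "e \<inter> f = {}" if ee: "e \<in> A'" and ff: "f \<in> A'" and ne: "e \<noteq> f" for e f
  proof -
    consider "e \<in> A" "e \<inter> K = {}" | "e \<in> B" "e \<inter> K \<noteq> {}" using ee unfolding A'_def by blast
    then show ?thesis
    proof cases
      case 1
      consider "f \<in> A" | "f \<in> B" "f \<inter> K \<noteq> {}" using ff unfolding A'_def by blast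
      then show ?thesis
      proof cases
        case 1 then show ?thesis using mA \<open>e \<in> A\<close> ne unfolding matching_def by blast
      next
        case 2 then have "f \<subseteq> K" using cl by blast
        then show ?thesis using \<open>e \<inter> K = {}\<close> by blast
      qed
    next
      case 2
      then have eK: "e \<subseteq> K" using cl by blast
      consider "f \<in> A" "f \<inter> K = {}" | "f \<in> B" using ff unfolding A'_def by blast
      then show ?thesis
      proof cases
        case 1 then show ?thesis using eK by blast
      next
        case 2 then show ?thesis using mB \<open>e \<in> B\<close> ne unfolding matching_def by blast
      qed
    qed
  qed
  have mB': "e \<inter> f = {}" if ee: "e \<in> B'" and ff: "f \<in> B'" and ne: "e \<noteq> f" for e f
  proof -
    consider "e \<in> B" "e \<inter> K = {}" | "e \<in> A" "e \<inter> K \<noteq> {}" using ee unfolding B'_def by blast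
    then show ?thesis
    proof cases
      case 1
      consider "f \<in> B" | "f \<in> A" "f \<inter> K \<noteq> {}" using ff unfolding B'_def by blast
      then show ?thesis
      proof cases
        case 1 then show ?thesis using mB \<open>e \<in> B\<close> ne unfolding matching_def by blast
      next
        case 2 then have "f \<subseteq> K" using cl by blast
        then show ?thesis using \<open>e \<inter> K = {}\<close> by blast
      qed
    next
      case 2
      then have eK: "e \<subseteq> K" using cl by blast
      consider "f \<in> B" "f \<inter> K = {}" | "f \<in> A" using ff unfolding B'_def by blast
      then show ?thesis
      proof cases
        case 1 then show ?thesis using eK by blast
      next
        case 2 then show ?thesis using mA \<open>e \<in> A\<close> ne unfolding matching_def by blast
      qed
    qed
  qed
  show "matching E A'" unfolding matching_def using mA' sub unfolding A'_def by blast
  show "matching E B'" unfolding matching_def using mB' sub unfolding B'_def by blast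
  show "A' \<inter> B' = {}" using d unfolding A'_def B'_def by blast
  show "A' \<union> B' = A \<union> B" unfolding A'_def B'_def by blast
qed

locale LG =
  fixes V :: "'a set" and E :: "'a set set" and k c :: nat
  assumes G: "simple_graph V E"
    and maxdeg: "\<forall>v\<in>V. degree E v \<le> 3"
    and mindeg: "\<forall>v\<in>V. degree E v \<ge> 2"
    and no33: "\<forall>u v. {u, v} \<in> E \<longrightarrow> \<not> (degree E u = 3 \<and> degree E v = 3)"
    and MAXK: "\<forall>N1 N2. matching E N1 \<and> matching E N2 \<and> N1 \<inter> N2 = {} \<longrightarrow> card (N1 \<union> N2) \<le> k"
    and MINC: "\<forall>N1 N2. matching E N1 \<and> matching E N2 \<and> N1 \<inter> N2 = {} \<and> card (N1 \<union> N2) = k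
                 \<longrightarrow> c \<le> rem_ncomp E N1 N2"
begin

lemma finV: "finite V" using G by (simp add: simple_graph_def)
lemma two: "e \<in> E \<Longrightarrow> card e = 2" using G by (simp add: simple_graph_def)
lemma EV: "e \<in> E \<Longrightarrow> e \<subseteq> V" using G by (simp add: simple_graph_def)
lemma finE: "finite E"
proof -
  have "E \<subseteq> Pow V" using EV by blast
  then show ?thesis using finV by (meson finite_Pow_iff rev_finite_subset)
qed
lemma fin_edge: "e \<in> E \<Longrightarrow> finite e" using two by (metis card.infinite zero_neq_numeral)
lemma rem_sub: "rem_edges E A B \<subseteq> E" by (auto simp: rem_edges_def)
lemma finR: "finite (rem_edges E A B)" using finE rem_sub by (meson rev_finite_subset)
lemma finRe: "\<forall>e\<in>rem_edges E A B. finite e" using fin_edge rem_sub by blast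
lemma finSub: "S \<subseteq> E \<Longrightarrow> finite S" using finE by (meson rev_finite_subset)
lemma finSube: "S \<subseteq> E \<Longrightarrow> \<forall>e\<in>S. finite e" using fin_edge by blast

lemma augment:
  assumes mA: "matching E A" and mB: "matching E B" and d: "A \<inter> B = {}" and ck: "card (A \<union> B) = k"
    and xy: "{x,y} \<in> rem_edges E A B" and mx: "miss B x" and my: "miss B y"
  shows False
proof -
  let ?B = "insert {x,y} B"
  have xyE: "{x,y} \<in> E" "{x,y} \<notin> A" "{x,y} \<notin> B" using xy by (auto simp: rem_edges_def)
  have "matching E ?B"
    unfolding matching_def
  proof (intro conjI ballI impI)
    show "?B \<subseteq> E" using mB xyE by (auto simp: matching_def)
  next
    fix e f assume "e \<in> ?B" "f \<in> ?B" "e \<noteq> f"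
    then consider "e = {x,y}" "f \<in> B" | "f = {x,y}" "e \<in> B" | "e \<in> B" "f \<in> B" by blast
    then show "e \<inter> f = {}"
    proof cases
      case 1 then show ?thesis using mx my unfolding miss_def by auto
    next
      case 2 then show ?thesis using mx my unfolding miss_def by auto
    next
      case 3 then show ?thesis using mB \<open>e \<noteq> f\<close> unfolding matching_def by blast
    qed
  qed
  moreover have "A \<inter> ?B = {}" using d xyE by blast
  ultimately have le: "card (A \<union> ?B) \<le> k" using MAXK mA by blast
  have fin: "finite (A \<union> B)" using mA mB finSub by (simp add: matching_def)
  have "A \<union> ?B = insert {x,y} (A \<union> B)" by blast
  then have "card (A \<union> ?B) = card (A \<union> B) + 1" using fin xyE by simp
  then show False using le ck by simp
qed

lemma kempe:
  assumes mA: "matching E A" and mB: "matching E B" and d: "A \<inter> B = {}" and ck: "card (A \<union> B) = k"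
    and xy: "{x,y} \<in> rem_edges E A B" and mx: "miss A x" and my: "miss B y"
  shows "reach (A \<union> B) x y"
proof (rule ccontr)
  assume nr: "\<not> reach (A \<union> B) x y"
  define K where "K = {z. reach (A \<union> B) x z}"
  define A' where "A' = {e\<in>A. e \<inter> K = {}} \<union> {e\<in>B. e \<inter> K \<noteq> {}}"
  define B' where "B' = {e\<in>B. e \<inter> K = {}} \<union> {e\<in>A. e \<inter> K \<noteq> {}}"
  have two': "\<forall>e\<in>E. card e = 2" using two by blast
  note fl = flip[where v=x, OF mA mB d two', folded K_def, folded A'_def B'_def]
  have xK: "x \<in> K" unfolding K_def by simp
  have yK: "y \<notin> K" unfolding K_def using nr by simp
  have "miss B' x"
    unfolding miss_def
  proof
    fix e assume "e \<in> B'"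
    then consider "e \<in> B" "e \<inter> K = {}" | "e \<in> A" unfolding B'_def by blast
    then show "x \<notin> e"
    proof cases
      case 1 then show ?thesis using xK by blast
    next
      case 2 then show ?thesis using mx unfolding miss_def by blast
    qed
  qed
  moreover have "miss B' y"
    unfolding miss_def
  proof
    fix e assume "e \<in> B'"
    then consider "e \<in> B" | "e \<in> A" "e \<inter> K \<noteq> {}" unfolding B'_def by blast
    then show "y \<notin> e"
    proof cases
      case 1 then show ?thesis using my unfolding miss_def by blast
    next
      case 2 then have "e \<subseteq> K" using fl(5) by blast
      then show ?thesis using yK by blast
    qed
  qed
  moreover have "card (A' \<union> B') = k" using fl(4) ck by simp
  moreover have "{x,y} \<in> rem_edges E A' B'" using xy fl(4) by (simp add: rem_edges_def)
  ultimately show False using augment[OF fl(1) fl(2) fl(3)] by blast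
qed

end

context LG begin

lemma edge_ne: "{p,q} \<in> E \<Longrightarrow> p \<noteq> q"
  using two by fastforce

lemma core_diff:
  assumes mA: "matching E A" and mB: "matching E B" and d: "A \<inter> B = {}" and ck: "card (A \<union> B) = k"
    and cle: "rem_ncomp E A B \<le> c"
    and e1: "{v1,v2} \<in> rem_edges E A B" and e2: "{v2,v3} \<in> rem_edges E A B" and v13: "v1 \<noteq> v3"
    and loc: "\<forall>e\<in>rem_edges E A B. v1 \<in> e \<or> v2 \<in> e \<or> v3 \<in> e \<longrightarrow> e = {v1,v2} \<or> e = {v2,v3}"
    and m2: "miss A v2" "miss B v2"
    and w1: "{v1,w1} \<in> A" and w3: "{v3,w3} \<in> B"
    and Rw1: "\<exists>e\<in>rem_edges E A B. w1 \<in> e" and Rw3: "\<exists>e\<in>rem_edges E A B. w3 \<in> e"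
    and nw: "w1 \<noteq> v3" "w3 \<noteq> v1"
  shows False
proof -
  define R where "R = rem_edges E A B"
  have AE: "A \<subseteq> E" and BE: "B \<subseteq> E" using mA mB by (auto simp: matching_def)
  have RE: "R \<subseteq> E" unfolding R_def by (rule rem_sub)
  have e1': "{v1,v2} \<in> E" "{v1,v2} \<notin> A" "{v1,v2} \<notin> B" using e1 by (auto simp: rem_edges_def)
  have e2': "{v2,v3} \<in> E" "{v2,v3} \<notin> A" "{v2,v3} \<notin> B" using e2 by (auto simp: rem_edges_def)
  have v12: "v1 \<noteq> v2" using edge_ne e1'(1) by blast
  have v23: "v2 \<noteq> v3" using edge_ne e2'(1) by blast
  have w1v: "w1 \<noteq> v1" using edge_ne w1 AE by blast
  have w3v: "w3 \<noteq> v3" using edge_ne w3 BE by blast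
  have w1v2: "w1 \<noteq> v2" using m2(1) w1 unfolding miss_def by blast
  have w3v2: "w3 \<noteq> v2" using m2(2) w3 unfolding miss_def by blast
  have w1B: "{v1,w1} \<notin> B" using d w1 by blast
  have w3A: "{v3,w3} \<notin> A" using d w3 by blast
  have wne: "{v1,w1} \<noteq> {v3,w3}"
  proof
    assume "{v1,w1} = {v3,w3}"
    then have "{v3,w3} \<notin> B" using w1B by simp
    then show False using w3 by simp
  qed
  have ene: "{v1,v2} \<noteq> {v2,v3}" using v13 v12 by (metis doubleton_eq_iff)
  define N1 where "N1 = insert {v1,v2} (A - {{v1,w1}})"
  define N2 where "N2 = insert {v2,v3} (B - {{v3,w3}})"
  have mN1: "matching E N1"
    unfolding matching_def
  proof (intro conjI ballI impI)
    show "N1 \<subseteq> E" unfolding N1_def using AE e1' by blast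
  next
    have dis: "{v1,v2} \<inter> f = {}" if "f \<in> A - {{v1,w1}}" for f
    proof -
      have "v1 \<notin> f" using match_uniq[OF mA, of f "{v1,w1}" v1] that w1 by auto
      moreover have "v2 \<notin> f" using m2(1) that unfolding miss_def by blast
      ultimately show ?thesis by blast
    qed
    fix e f assume "e \<in> N1" "f \<in> N1" "e \<noteq> f"
    then consider "e = {v1,v2}" "f \<in> A - {{v1,w1}}" | "f = {v1,v2}" "e \<in> A - {{v1,w1}}"
      | "e \<in> A" "f \<in> A" unfolding N1_def by blast
    then show "e \<inter> f = {}"
    proof cases
      case 1 then show ?thesis using dis by blast
    next
      case 2 then show ?thesis using dis by blast
    next
      case 3 then show ?thesis using mA \<open>e \<noteq> f\<close> unfolding matching_def by blast
    qed
  qed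
  have mN2: "matching E N2"
    unfolding matching_def
  proof (intro conjI ballI impI)
    show "N2 \<subseteq> E" unfolding N2_def using BE e2' by blast
  next
    have dis: "{v2,v3} \<inter> f = {}" if "f \<in> B - {{v3,w3}}" for f
    proof -
      have "v3 \<notin> f" using match_uniq[OF mB, of f "{v3,w3}" v3] that w3 by auto
      moreover have "v2 \<notin> f" using m2(2) that unfolding miss_def by blast
      ultimately show ?thesis by blast
    qed
    fix e f assume "e \<in> N2" "f \<in> N2" "e \<noteq> f"
    then consider "e = {v2,v3}" "f \<in> B - {{v3,w3}}" | "f = {v2,v3}" "e \<in> B - {{v3,w3}}"
      | "e \<in> B" "f \<in> B" unfolding N2_def by blast
    then show "e \<inter> f = {}"
    proof cases
      case 1 then show ?thesis using dis by blast
    next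
      case 2 then show ?thesis using dis by blast
    next
      case 3 then show ?thesis using mB \<open>e \<noteq> f\<close> unfolding matching_def by blast
    qed
  qed
  have dN: "N1 \<inter> N2 = {}" unfolding N1_def N2_def using d e1' e2' ene by blast
  have UN: "N1 \<union> N2 = insert {v1,v2} (insert {v2,v3} ((A \<union> B) - {{v1,w1},{v3,w3}}))"
    unfolding N1_def N2_def using w1B w3A by blast
  have finS: "finite (A \<union> B)" using AE BE finSub by simp
  have cS: "card ((A \<union> B) - {{v1,w1},{v3,w3}}) = card (A \<union> B) - 2"
  proof -
    have "{{v1,w1},{v3,w3}} \<subseteq> A \<union> B" using w1 w3 by blast
    moreover have "card {{v1,w1},{v3,w3}} = 2" using wne by simp
    ultimately show ?thesis using finS by (simp add: card_Diff_subset)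
  qed
  have c2: "card (A \<union> B) \<ge> 2"
  proof -
    have "{{v1,w1},{v3,w3}} \<subseteq> A \<union> B" using w1 w3 by blast
    then have "card {{v1,w1},{v3,w3}} \<le> card (A \<union> B)" using finS by (rule card_mono[rotated])
    then show ?thesis using wne by simp
  qed
  have cN: "card (N1 \<union> N2) = k"
  proof -
    have f2: "finite ((A \<union> B) - {{v1,w1},{v3,w3}})" using finS by simp
    have n1: "{v2,v3} \<notin> (A \<union> B) - {{v1,w1},{v3,w3}}" using e2' by blast
    have n2: "{v1,v2} \<notin> insert {v2,v3} ((A \<union> B) - {{v1,w1},{v3,w3}})" using e1' ene by blast
    show ?thesis unfolding UN using f2 n1 n2 cS c2 ck by simp
  qed
  define R0 where "R0 = R - {{v1,v2},{v2,v3}}"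
  have R0E: "R0 \<subseteq> E" using RE unfolding R0_def by blast
  have nR0: "v \<notin> \<Union>R0" if "v \<in> {v1,v2,v3}" for v
  proof
    assume "v \<in> \<Union>R0"
    then obtain e where "e \<in> R0" "v \<in> e" by blast
    then show False using loc that unfolding R0_def R_def by blast
  qed
  have remN: "rem_edges E N1 N2 = insert {v1,w1} (insert {v3,w3} R0)"
  proof -
    have "{v1,w1} \<in> E" "{v3,w3} \<in> E" using w1 w3 AE BE by blast+
    moreover have "{v1,w1} \<notin> N1 \<union> N2"
    proof -
      have "{v1,w1} \<noteq> {v1,v2}" using w1v2 by (metis doubleton_eq_iff)
      moreover have "{v1,w1} \<noteq> {v2,v3}" using v12 v13 by (metis doubleton_eq_iff)
      ultimately show ?thesis unfolding UN using w1B by blast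
    qed
    moreover have "{v3,w3} \<notin> N1 \<union> N2"
    proof -
      have "{v3,w3} \<noteq> {v1,v2}" using v13 v23 by (metis doubleton_eq_iff)
      moreover have "{v3,w3} \<noteq> {v2,v3}" using w3v2 by (metis doubleton_eq_iff)
      ultimately show ?thesis unfolding UN using wne by blast
    qed
    ultimately have h: "{v1,w1} \<in> E" "{v3,w3} \<in> E" "{v1,w1} \<notin> N1 \<union> N2" "{v3,w3} \<notin> N1 \<union> N2"
      by auto
    show ?thesis
    proof (rule set_eqI)
      fix e
      show "e \<in> rem_edges E N1 N2 \<longleftrightarrow> e \<in> insert {v1,w1} (insert {v3,w3} R0)"
      proof
        assume "e \<in> rem_edges E N1 N2"
        then have a: "e \<in> E" "e \<notin> N1 \<union> N2" by (auto simp: rem_edges_def)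
        show "e \<in> insert {v1,w1} (insert {v3,w3} R0)"
        proof (cases "e = {v1,w1} \<or> e = {v3,w3}")
          case True then show ?thesis by blast
        next
          case False
          then have "e \<notin> A \<union> B" using a(2) unfolding UN by blast
          moreover have "e \<noteq> {v1,v2}" "e \<noteq> {v2,v3}" using a(2) unfolding UN by blast+
          ultimately have "e \<in> R0" unfolding R0_def R_def rem_edges_def using a(1) by blast
          then show ?thesis by blast
        qed
      next
        assume "e \<in> insert {v1,w1} (insert {v3,w3} R0)"
        then consider "e = {v1,w1}" | "e = {v3,w3}" | "e \<in> R0" by blast
        then show "e \<in> rem_edges E N1 N2"
        proof cases
          case 1 then show ?thesis using h by (simp add: rem_edges_def)
        next
          case 2 then show ?thesis using h by (simp add: rem_edges_def)
        next
          case 3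
          then have "e \<in> E" "e \<notin> A \<union> B" "e \<noteq> {v1,v2}" "e \<noteq> {v2,v3}"
            unfolding R0_def R_def rem_edges_def by blast+
          then have "e \<notin> N1 \<union> N2" unfolding UN by blast
          then show ?thesis using \<open>e \<in> E\<close> by (simp add: rem_edges_def)
        qed
      qed
    qed
  qed
  have RR0: "R = insert {v1,v2} (insert {v2,v3} R0)" unfolding R0_def using e1 e2 R_def by blast
  have fR0: "finite R0" "\<forall>e\<in>R0. finite e" using R0E finSub finSube by auto
  have fR1: "finite (insert {v2,v3} R0)" "\<forall>e\<in>insert {v2,v3} R0. finite e" using fR0 by auto
  have fR2: "finite (insert {v3,w3} R0)" "\<forall>e\<in>insert {v3,w3} R0. finite e" using fR0 by auto
  have "ncomp R = ncomp R0 + 1"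
  proof -
    have a: "ncomp (insert {v2,v3} R0) = ncomp R0 + 1"
      using ncomp_iso[OF fR0 v23] nR0 by simp
    have "v1 \<notin> \<Union>(insert {v2,v3} R0)" using nR0 v12 v13 by simp
    then have b: "ncomp (insert {v1,v2} (insert {v2,v3} R0)) = ncomp (insert {v2,v3} R0)"
      using ncomp_pend[OF fR1] by simp
    show ?thesis unfolding RR0 using a b by simp
  qed
  moreover have "ncomp (rem_edges E N1 N2) = ncomp R0"
  proof -
    obtain e3 where e3: "e3 \<in> R" "w3 \<in> e3" using Rw3 R_def by blast
    have "e3 \<noteq> {v1,v2}" using e3 nw(2) w3v2 by blast
    moreover have "e3 \<noteq> {v2,v3}" using e3 w3v w3v2 by blast
    ultimately have "w3 \<in> \<Union>R0" using e3 unfolding R0_def by blast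
    moreover have "v3 \<notin> \<Union>R0" using nR0 by simp
    ultimately have a: "ncomp (insert {v3,w3} R0) = ncomp R0"
      using ncomp_pend[OF fR0] by simp
    obtain e4 where e4: "e4 \<in> R" "w1 \<in> e4" using Rw1 R_def by blast
    have "e4 \<noteq> {v1,v2}" using e4 w1v w1v2 by blast
    moreover have "e4 \<noteq> {v2,v3}" using e4 nw(1) w1v2 by blast
    ultimately have "w1 \<in> \<Union>(insert {v3,w3} R0)" using e4 unfolding R0_def by blast
    moreover have "v1 \<notin> \<Union>(insert {v3,w3} R0)" using nR0 v13 nw(2) by simp
    ultimately have b: "ncomp (insert {v1,w1} (insert {v3,w3} R0)) = ncomp (insert {v3,w3} R0)"
      using ncomp_pend[OF fR2] by simp
    show ?thesis unfolding remN using a b by simp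
  qed
  moreover have "c \<le> rem_ncomp E N1 N2" using MINC mN1 mN2 dN cN by blast
  ultimately show False using cle unfolding rem_ncomp_eq R_def by simp
qed

lemma core_same:
  assumes mA: "matching E A" and mB: "matching E B" and d: "A \<inter> B = {}" and ck: "card (A \<union> B) = k"
    and cle: "rem_ncomp E A B \<le> c"
    and e1: "{v1,v2} \<in> rem_edges E A B" and e2: "{v2,v3} \<in> rem_edges E A B" and v13: "v1 \<noteq> v3"
    and loc: "\<forall>e\<in>rem_edges E A B. v1 \<in> e \<or> v2 \<in> e \<or> v3 \<in> e \<longrightarrow> e = {v1,v2} \<or> e = {v2,v3}"
    and m2: "miss A v2" "miss B v2"
    and w1: "{v1,w1} \<in> A" and w3: "{v3,w3} \<in> A"
    and Rw1: "\<exists>e\<in>rem_edges E A B. w1 \<in> e" and Rw3: "\<exists>e\<in>rem_edges E A B. w3 \<in> e"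
    and nw: "w1 \<noteq> v3" "w3 \<noteq> v1"
    and nr: "\<not> reach (A \<union> B) v1 v3"
  shows False
proof -
  define K where "K = {z. reach (A \<union> B) v3 z}"
  define A' where "A' = {e\<in>A. e \<inter> K = {}} \<union> {e\<in>B. e \<inter> K \<noteq> {}}"
  define B' where "B' = {e\<in>B. e \<inter> K = {}} \<union> {e\<in>A. e \<inter> K \<noteq> {}}"
  have two': "\<forall>e\<in>E. card e = 2" using two by blast
  note fl = flip[where v=v3, OF mA mB d two', folded K_def, folded A'_def B'_def]
  have U: "A' \<union> B' = A \<union> B" by (rule fl(4))
  have rem: "rem_edges E A' B' = rem_edges E A B" unfolding rem_edges_def U ..
  have v1K: "v1 \<notin> K"
  proof
    assume "v1 \<in> K"
    then have "reach (A \<union> B) v3 v1" unfolding K_def by simp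
    then show False using nr reach_sym by metis
  qed
  have w1K: "w1 \<notin> K"
  proof
    assume "w1 \<in> K"
    then have "reach (A \<union> B) v3 w1" unfolding K_def by simp
    moreover have "reach (A \<union> B) w1 v1" using w1 by (metis UnI1 insert_commute reach_edge)
    ultimately have "reach (A \<union> B) v3 v1" by (rule reach_trans)
    then show False using v1K unfolding K_def by simp
  qed
  have w1': "{v1,w1} \<in> A'" unfolding A'_def using w1 v1K w1K by blast
  have w3': "{v3,w3} \<in> B'" unfolding B'_def using w3 unfolding K_def by auto
  have m2': "miss A' v2" "miss B' v2" using m2 U unfolding miss_def by blast+
  show False
    apply (rule core_diff[OF fl(1) fl(2) fl(3), of v1 v2 v3 w1 w3])
    using ck U apply simp
    using cle rem apply (simp add: rem_ncomp_def)
    using e1 e2 v13 loc m2' w1' w3' Rw1 Rw3 nw rem by simp_all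
qed

end

lemma match_deg1:
  assumes "matching E A" "finite A" shows "card {e\<in>A. v\<in>e} \<le> 1"
proof -
  have "finite {e\<in>A. v\<in>e}" using assms(2) by simp
  moreover have "\<forall>a1\<in>{e\<in>A. v\<in>e}. \<forall>a2\<in>{e\<in>A. v\<in>e}. a1 = a2"
    using match_uniq[OF assms(1)] by blast
  ultimately show ?thesis by (simp add: card_le_Suc0_iff_eq)
qed

context LG begin

lemma inV: "e \<in> E \<Longrightarrow> v \<in> e \<Longrightarrow> v \<in> V" using EV by blast

lemma deg_ge:
  assumes "S \<subseteq> {e\<in>E. v\<in>e}" shows "card S \<le> degree E v"
  unfolding degree_def using assms finE by (simp add: card_mono)

lemma at_eq:
  assumes "S \<subseteq> {e\<in>E. v\<in>e}" "card S = degree E v"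
  shows "{e\<in>E. v\<in>e} = S"
proof -
  have "finite {e\<in>E. v\<in>e}" using finE by simp
  then show ?thesis using assms unfolding degree_def by (metis card_subset_eq)
qed

lemma deg_le3: "e \<in> E \<Longrightarrow> v \<in> e \<Longrightarrow> degree E v \<le> 3" using maxdeg inV by blast
lemma deg_ge2: "e \<in> E \<Longrightarrow> v \<in> e \<Longrightarrow> degree E v \<ge> 2" using mindeg inV by blast

lemma nbr3_deg2:
  assumes "{u,a} \<in> E" "degree E u = 3" shows "degree E a = 2"
proof -
  have "degree E a \<noteq> 3" using no33 assms by blast
  moreover have "degree E a \<le> 3" "degree E a \<ge> 2" using deg_le3[OF assms(1)] deg_ge2[OF assms(1)] by auto
  ultimately show ?thesis by simp
qed

lemma Fdeg_le2:
  assumes "matching E A" "matching E B" shows "degree (A \<union> B) v \<le> 2"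
proof -
  have fA: "finite A" "finite B" using assms finSub by (auto simp: matching_def)
  have "{e\<in>A \<union> B. v\<in>e} = {e\<in>A. v\<in>e} \<union> {e\<in>B. v\<in>e}" by blast
  then have "degree (A \<union> B) v \<le> card {e\<in>A. v\<in>e} + card {e\<in>B. v\<in>e}"
    unfolding degree_def by (metis card_Un_le)
  moreover have "card {e\<in>A. v\<in>e} \<le> 1" "card {e\<in>B. v\<in>e} \<le> 1"
    using match_deg1[OF assms(1) fA(1)] match_deg1[OF assms(2) fA(2)] by auto
  ultimately show ?thesis by linarith
qed

lemma three_ends_AB:
  assumes mA: "matching E A" and mB: "matching E B"
    and "{e\<in>A \<union> B. x\<in>e} = {gx}" "{e\<in>A \<union> B. y\<in>e} = {gy}" "{e\<in>A \<union> B. z\<in>e} = {gz}"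
    "x \<noteq> y" "x \<noteq> z" "y \<noteq> z" "reach (A \<union> B) x y" "reach (A \<union> B) x z"
  shows False
proof -
  have sub: "A \<union> B \<subseteq> E" using mA mB by (auto simp: matching_def)
  show False
    apply (rule three_ends[of "A \<union> B" x y z])
    using sub finSub apply blast
    using sub two apply blast
    using Fdeg_le2[OF mA mB] apply blast
    using assms(3-) by (simp_all add: degree_def)
qed

lemma caseB:
  assumes mA: "matching E A" and mB: "matching E B" and d: "A \<inter> B = {}" and ck: "card (A \<union> B) = k"
    and x: "{u1,u2} \<in> rem_edges E A B" and y: "{u2,u3} \<in> rem_edges E A B" and u13: "u1 \<noteq> u3"
    and h: "h \<in> A" "u2 \<in> h"
  shows False
proof -
  have AE: "A \<subseteq> E" and BE: "B \<subseteq> E" using mA mB by (auto simp: matching_def)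
  have xE: "{u1,u2} \<in> E" "{u1,u2} \<notin> A" "{u1,u2} \<notin> B" using x by (auto simp: rem_edges_def)
  have yE: "{u2,u3} \<in> E" "{u2,u3} \<notin> A" "{u2,u3} \<notin> B" using y by (auto simp: rem_edges_def)
  have u12: "u1 \<noteq> u2" using edge_ne xE(1) by blast
  have u23: "u2 \<noteq> u3" using edge_ne yE(1) by blast
  have xy: "{u1,u2} \<noteq> {u2,u3}" using u13 u12 by (metis doubleton_eq_iff)
  have hx: "h \<noteq> {u1,u2}" "h \<noteq> {u2,u3}" using h xE yE by blast+
  have c3: "card {{u1,u2},{u2,u3},h} = 3" using xy hx by simp
  have s3: "{{u1,u2},{u2,u3},h} \<subseteq> {e\<in>E. u2\<in>e}" using xE yE h AE by auto
  have d3: "degree E u2 = 3" using deg_ge[OF s3] c3 deg_le3[OF xE(1), of u2] by simp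
  have at2: "{e\<in>E. u2\<in>e} = {{u1,u2},{u2,u3},h}" using at_eq[OF s3] c3 d3 by simp
  have mB2: "miss B u2"
    unfolding miss_def
  proof (intro ballI notI)
    fix e assume "e \<in> B" "u2 \<in> e"
    then have "e \<in> {{u1,u2},{u2,u3},h}" using at2 BE by blast
    then show False using \<open>e \<in> B\<close> xE yE h d by blast
  qed
  have side: "\<exists>g. {e\<in>A \<union> B. u\<in>e} = {g} \<and> miss A u" if uu: "{u,u2} \<in> rem_edges E A B" for u
  proof -
    have uE: "{u,u2} \<in> E" "{u,u2} \<notin> A" "{u,u2} \<notin> B" using uu by (auto simp: rem_edges_def)
    have du: "degree E u \<le> 2"
    proof -
      have "degree E u \<noteq> 3" using no33 uE(1) d3 by blast
      then show ?thesis using deg_le3[OF uE(1), of u] by simp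
    qed
    have "\<not> miss B u" using augment[OF mA mB d ck uu _ mB2] by blast
    then obtain b where b: "b \<in> B" "u \<in> b" unfolding miss_def by blast
    have ma: "miss A u"
      unfolding miss_def
    proof (intro ballI notI)
      fix e assume e: "e \<in> A" "u \<in> e"
      have "e \<noteq> b" using e b d by blast
      moreover have "e \<noteq> {u,u2}" "b \<noteq> {u,u2}" using e b uE by blast+
      ultimately have c: "card {{u,u2}, b, e} = 3" by simp
      have "{{u,u2}, b, e} \<subseteq> {e\<in>E. u\<in>e}" using e b uE AE BE by auto
      from deg_ge[OF this] c have "3 \<le> degree E u" by simp
      then show False using du by simp
    qed
    have "{e\<in>A \<union> B. u\<in>e} = {b}"
    proof (rule set_eqI)
      fix e show "e \<in> {e\<in>A \<union> B. u\<in>e} \<longleftrightarrow> e \<in> {b}"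
        using ma b match_uniq[OF mB, of e b u] unfolding miss_def by blast
    qed
    then show ?thesis using ma by blast
  qed
  have y': "{u3,u2} \<in> rem_edges E A B" using y by (simp add: insert_commute)
  obtain g1 where g1: "{e\<in>A \<union> B. u1\<in>e} = {g1}" "miss A u1" using side[OF x] by blast
  obtain g3 where g3: "{e\<in>A \<union> B. u3\<in>e} = {g3}" "miss A u3" using side[OF y'] by blast
  have g2: "{e\<in>A \<union> B. u2\<in>e} = {h}"
  proof (rule set_eqI)
    fix e show "e \<in> {e\<in>A \<union> B. u2\<in>e} \<longleftrightarrow> e \<in> {h}"
      using mB2 h match_uniq[OF mA, of e h u2] unfolding miss_def by blast
  qed
  have r1: "reach (A \<union> B) u1 u2" using kempe[OF mA mB d ck x g1(2) mB2] .
  have r3: "reach (A \<union> B) u3 u2" using kempe[OF mA mB d ck y' g3(2) mB2] .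
  show False
    using three_ends_AB[OF mA mB g2 g1(1) g3(1) u12[symmetric] u23 u13 reach_sym[OF r1] reach_sym[OF r3]] .
qed

end

lemma ncomp_P3:
  assumes "finite R0" "\<forall>e\<in>R0. finite e" "v1 \<noteq> v2" "v2 \<noteq> v3" "v1 \<noteq> v3"
    "v1 \<notin> \<Union>R0" "v2 \<notin> \<Union>R0" "v3 \<notin> \<Union>R0"
  shows "ncomp (insert {v1,v2} (insert {v2,v3} R0)) = ncomp R0 + 1"
proof -
  have a: "ncomp (insert {v2,v3} R0) = ncomp R0 + 1"
    using ncomp_iso[OF assms(1,2,4,7,8)] .
  have "v1 \<notin> \<Union>(insert {v2,v3} R0)" using assms by simp
  moreover have "v2 \<in> \<Union>(insert {v2,v3} R0)" by simp
  moreover have "finite (insert {v2,v3} R0)" "\<forall>e\<in>insert {v2,v3} R0. finite e" using assms by auto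
  ultimately have "ncomp (insert {v1,v2} (insert {v2,v3} R0)) = ncomp (insert {v2,v3} R0)"
    using ncomp_pend by metis
  then show ?thesis using a by simp
qed

context LG begin

lemma two_edge: "e \<in> E \<Longrightarrow> v \<in> e \<Longrightarrow> \<exists>w. e = {v,w} \<and> w \<noteq> v"
proof -
  assume "e \<in> E" "v \<in> e"
  then obtain p q where "e = {p,q}" "p \<noteq> q" using two by (meson card_2_iff)
  then show ?thesis using \<open>v \<in> e\<close> by (metis insert_commute insertE singletonD)
qed

lemma caseA_same:
  assumes mA: "matching E A" and mB: "matching E B" and d: "A \<inter> B = {}" and ck: "card (A \<union> B) = k"
    and cle: "rem_ncomp E A B \<le> c"
    and x: "{u1,u2} \<in> rem_edges E A B" and y: "{u2,u3} \<in> rem_edges E A B" and u13: "u1 \<noteq> u3"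
    and loc: "\<forall>e\<in>rem_edges E A B. u1 \<in> e \<or> u2 \<in> e \<or> u3 \<in> e \<longrightarrow> e = {u1,u2} \<or> e = {u2,u3}"
    and at2: "{e\<in>E. u2\<in>e} = {{u1,u2},{u2,u3}}"
    and m2: "miss A u2" "miss B u2"
    and ea1: "{u1,a} \<in> A" and eb1: "{u1,b} \<in> B" and ec3: "{u3,cx} \<in> A" and ed3: "{u3,d} \<in> B"
    and Ra: "ea \<in> rem_edges E A B" "a \<in> ea" and Rc: "ec \<in> rem_edges E A B" "cx \<in> ec"
    and nRb: "\<forall>e\<in>rem_edges E A B. b \<notin> e" and nRd: "\<forall>e\<in>rem_edges E A B. d \<notin> e"
    and r13: "reach (A \<union> B) u1 u3"
    and cyc: "is_cycle (H_adj E A B) xs" "{u1,u2} \<in> set xs"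
  shows False
proof -
  define R where "R = rem_edges E A B"
  define F where "F = A \<union> B"
  have AE: "A \<subseteq> E" and BE: "B \<subseteq> E" using mA mB by (auto simp: matching_def)
  have RE: "R \<subseteq> E" unfolding R_def by (rule rem_sub)
  have RAB: "e \<in> R \<Longrightarrow> e \<in> E \<and> e \<notin> A \<and> e \<notin> B" for e unfolding R_def rem_edges_def by blast
  have xE: "{u1,u2} \<in> E" "{u1,u2} \<notin> A" "{u1,u2} \<notin> B" using x RAB R_def by auto
  have yE: "{u2,u3} \<in> E" "{u2,u3} \<notin> A" "{u2,u3} \<notin> B" using y RAB R_def by auto
  have u12: "u1 \<noteq> u2" using edge_ne xE(1) by blast
  have u23: "u2 \<noteq> u3" using edge_ne yE(1) by blast
  have ea1E: "{u1,a} \<in> E" "{u1,b} \<in> E" "{u3,cx} \<in> E" "{u3,d} \<in> E" using ea1 eb1 ec3 ed3 AE BE by auto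
  have nAB: "e \<in> A \<Longrightarrow> e \<notin> B" for e using d by blast
  have at1: "{e\<in>E. u1\<in>e} = {{u1,u2},{u1,a},{u1,b}}"
  proof -
    have ne: "{u1,u2} \<noteq> {u1,a}" "{u1,u2} \<noteq> {u1,b}" "{u1,a} \<noteq> {u1,b}"
      using xE ea1 eb1 nAB by metis+
    have s: "{{u1,u2},{u1,a},{u1,b}} \<subseteq> {e\<in>E. u1\<in>e}" using xE ea1E by auto
    have c3: "card {{u1,u2},{u1,a},{u1,b}} = 3" using ne by simp
    have "degree E u1 = 3" using deg_ge[OF s] c3 deg_le3[OF xE(1), of u1] by simp
    then show ?thesis using at_eq[OF s] c3 by simp
  qed
  have d1: "degree E u1 = 3" using at1 xE ea1 eb1 nAB unfolding degree_def
    by (metis card_3_iff)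
  have at3: "{e\<in>E. u3\<in>e} = {{u2,u3},{u3,cx},{u3,d}}"
  proof -
    have ne: "{u2,u3} \<noteq> {u3,cx}" "{u2,u3} \<noteq> {u3,d}" "{u3,cx} \<noteq> {u3,d}"
      using yE ec3 ed3 nAB by metis+
    have s: "{{u2,u3},{u3,cx},{u3,d}} \<subseteq> {e\<in>E. u3\<in>e}" using yE ea1E by auto
    have c3: "card {{u2,u3},{u3,cx},{u3,d}} = 3" using ne by simp
    have "degree E u3 = 3" using deg_ge[OF s] c3 deg_le3[OF yE(1), of u3] by simp
    then show ?thesis using at_eq[OF s] c3 by simp
  qed
  have d3: "degree E u3 = 3" using at3 yE ec3 ed3 nAB unfolding degree_def
    by (metis card_3_iff)
  have da: "degree E a = 2" using nbr3_deg2[OF ea1E(1) d1] .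
  have dc: "degree E cx = 2" using nbr3_deg2[OF ea1E(3) d3] .
  have au1: "a \<noteq> u1" using edge_ne ea1E(1) by metis
  have au2: "a \<noteq> u2" using m2(1) ea1 unfolding miss_def by blast
  have au3: "a \<noteq> u3" using da d3 by auto
  have cu3: "cx \<noteq> u3" using edge_ne ea1E(3) by metis
  have cu2: "cx \<noteq> u2" using m2(1) ec3 unfolding miss_def by blast
  have cu1: "cx \<noteq> u1" using da d1 dc by (metis numeral_eq_iff semiring_norm(88) semiring_norm(89))
  have ac: "a \<noteq> cx"
  proof
    assume "a = cx"
    then have "{u1,a} = {u3,a}" using match_uniq[OF mA ea1, of "{u3,a}" a] ec3 by simp
    then show False using u13 au1 by (metis doubleton_eq_iff)
  qed
  have eaE: "ea \<in> E" "ea \<notin> A" "ea \<notin> B" using RAB Ra R_def by auto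
  obtain a' where a': "ea = {a,a'}" "a' \<noteq> a" using two_edge[OF eaE(1) Ra(2)] by blast
  have ata: "{e\<in>E. a\<in>e} = {{u1,a},ea}"
  proof -
    have s: "{{u1,a},ea} \<subseteq> {e\<in>E. a\<in>e}" using ea1E eaE Ra by auto
    have "{u1,a} \<noteq> ea" using ea1 eaE by metis
    then have "card {{u1,a},ea} = 2" by simp
    then show ?thesis using at_eq[OF s] da by simp
  qed
  have Runiq_a: "e = ea" if "e \<in> R" "a \<in> e" for e
  proof -
    have "e \<in> {e\<in>E. a\<in>e}" using that RAB by simp
    then have "e = {u1,a} \<or> e = ea" using ata by simp
    moreover have "e \<noteq> {u1,a}" using that(1) RAB ea1 by metis
    ultimately show ?thesis by simp
  qed
  have ecE: "ec \<in> E" "ec \<notin> A" "ec \<notin> B" using RAB Rc R_def by auto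
  have atc: "{e\<in>E. cx\<in>e} = {{u3,cx},ec}"
  proof -
    have s: "{{u3,cx},ec} \<subseteq> {e\<in>E. cx\<in>e}" using ea1E ecE Rc by auto
    have "{u3,cx} \<noteq> ec" using ec3 ecE by metis
    then have "card {{u3,cx},ec} = 2" by simp
    then show ?thesis using at_eq[OF s] dc by simp
  qed
  have a'u: "a' \<noteq> u1" "a' \<noteq> u2" "a' \<noteq> u3"
  proof -
    have "ea \<noteq> {u1,u2}" "ea \<noteq> {u2,u3}" using a'(1) au1 au2 au3 by (metis doubleton_eq_iff)+
    then have "\<not> (u1 \<in> ea \<or> u2 \<in> ea \<or> u3 \<in> ea)" using loc Ra unfolding R_def by blast
    then show "a' \<noteq> u1" "a' \<noteq> u2" "a' \<noteq> u3" using a'(1) by auto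
  qed
  have eaxy: "ea \<noteq> {u1,u2}" "ea \<noteq> {u2,u3}" using a'(1) au1 au2 au3 by (metis doubleton_eq_iff)+
  have missBa: "miss B a"
    unfolding miss_def
  proof (intro ballI notI)
    fix e assume e: "e \<in> B" "a \<in> e"
    then have "e \<in> {e\<in>E. a\<in>e}" using BE by auto
    then have "e = {u1,a} \<or> e = ea" using ata by simp
    then show False using e(1) ea1 nAB eaE by metis
  qed
  have missBc: "miss B cx"
    unfolding miss_def
  proof (intro ballI notI)
    fix e assume e: "e \<in> B" "cx \<in> e"
    then have "e \<in> {e\<in>E. cx\<in>e}" using BE by auto
    then have "e = {u3,cx} \<or> e = ec" using atc by simp
    then show False using e(1) ec3 nAB ecE by metis
  qed
  have a'c: "a' \<noteq> cx"
  proof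
    assume "a' = cx"
    then have "{a,cx} \<in> rem_edges E A B" using Ra a' by simp
    then show False using augment[OF mA mB d ck _ missBa missBc] by blast
  qed
  have a'b: "a' \<noteq> b" using nRb Ra a' by blast
  have a'd: "a' \<noteq> d" using nRd Ra a' by blast
  have "\<not> miss B a'" using augment[OF mA mB d ck _ missBa] Ra a' by blast
  then obtain eq where eq: "eq \<in> B" "a' \<in> eq" unfolding miss_def by blast
  then obtain q where q: "eq = {a',q}" "q \<noteq> a'" using two_edge BE by blast
  have aq: "{a',q} \<in> B" using eq q by simp
  have atFc: "{e\<in>F. cx\<in>e} = {{u3,cx}}"
  proof (rule set_eqI, rule iffI)
    fix e assume "e \<in> {e\<in>F. cx\<in>e}"
    then have e: "e \<in> A \<union> B" "cx \<in> e" unfolding F_def by auto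
    then have "e \<in> {e\<in>E. cx\<in>e}" using AE BE by auto
    then have "e = {u3,cx} \<or> e = ec" using atc by simp
    then show "e \<in> {{u3,cx}}" using e(1) ecE by auto
  next
    fix e assume "e \<in> {{u3,cx}}" then show "e \<in> {e\<in>F. cx\<in>e}" using ec3 unfolding F_def by simp
  qed
  have atFa: "{e\<in>F. a\<in>e} = {{u1,a}}"
  proof (rule set_eqI, rule iffI)
    fix e assume "e \<in> {e\<in>F. a\<in>e}"
    then have e: "e \<in> A \<union> B" "a \<in> e" unfolding F_def by auto
    then have "e \<in> {e\<in>E. a\<in>e}" using AE BE by auto
    then have "e = {u1,a} \<or> e = ea" using ata by simp
    then show "e \<in> {{u1,a}}" using e(1) eaE by auto
  next
    fix e assume "e \<in> {{u1,a}}" then show "e \<in> {e\<in>F. a\<in>e}" using ea1 unfolding F_def by simp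
  qed
  have rac: "reach F a cx"
  proof -
    have "reach F a u1" using ea1 unfolding F_def by (metis UnI1 insert_commute reach_edge)
    moreover have "reach F u1 u3" using r13 unfolding F_def .
    moreover have "reach F u3 cx" using ec3 unfolding F_def by (metis UnI1 reach_edge)
    ultimately show ?thesis using reach_trans by metis
  qed
  have "\<not> miss A a'"
  proof
    assume ma': "miss A a'"
    have "{a',a} \<in> rem_edges E A B" using Ra a' by (simp add: insert_commute)
    then have "reach F a' a" using kempe[OF mA mB d ck _ ma' missBa] unfolding F_def by blast
    moreover have "{e\<in>F. a'\<in>e} = {{a',q}}"
      unfolding F_def using ma' aq match_uniq[OF mB, of _ "{a',q}" a'] unfolding miss_def by blast
    ultimately show False
      using three_ends_AB[OF mA mB atFa[unfolded F_def] _ atFc[unfolded F_def], of a' "{a',q}"]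
        a'(2) ac a'c rac reach_sym unfolding F_def by metis
  qed
  then obtain ep where ep: "ep \<in> A" "a' \<in> ep" unfolding miss_def by blast
  then obtain p where p: "ep = {a',p}" "p \<noteq> a'" using two_edge AE by blast
  have ap: "{a',p} \<in> A" using ep p by simp
  have apE: "{a',p} \<in> E" "{a',q} \<in> E" using ap aq AE BE by auto
  have ata': "{e\<in>E. a'\<in>e} = {ea,{a',p},{a',q}}"
  proof -
    have ne: "ea \<noteq> {a',p}" "ea \<noteq> {a',q}" "{a',p} \<noteq> {a',q}" using eaE ap aq nAB by metis+
    have s: "{ea,{a',p},{a',q}} \<subseteq> {e\<in>E. a'\<in>e}" using eaE apE a' by auto
    have c3: "card {ea,{a',p},{a',q}} = 3" using ne by simp
    have "degree E a' = 3" using deg_ge[OF s] c3 deg_le3[OF apE(1), of a'] by simp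
    then show ?thesis using at_eq[OF s] c3 by simp
  qed
  have da': "degree E a' = 3" using ata' eaE ap aq nAB unfolding degree_def by (metis card_3_iff)
  have Runiq_a': "e = ea" if "e \<in> R" "a' \<in> e" for e
  proof -
    have "e \<in> {e\<in>E. a'\<in>e}" using that RAB by simp
    then have "e = ea \<or> e = {a',p} \<or> e = {a',q}" using ata' by simp
    moreover have "e \<noteq> {a',p}" "e \<noteq> {a',q}" using that(1) RAB ap aq by metis+
    ultimately show ?thesis by simp
  qed
  have dp: "degree E p = 2" using nbr3_deg2[OF apE(1) da'] .
  have pu1: "p \<noteq> u1"
  proof
    assume "p = u1"
    then have "{a',u1} = {u1,a}" using match_uniq[OF mA ap ea1, of u1] by simp
    then show False using a'(2) a'u(1) by (metis doubleton_eq_iff)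
  qed
  have qu1: "q \<noteq> u1"
  proof
    assume "q = u1"
    then have "{a',u1} = {u1,b}" using match_uniq[OF mB aq eb1, of u1] by simp
    then show False using a'b a'u(1) by (metis doubleton_eq_iff)
  qed
  have pu3: "p \<noteq> u3"
  proof
    assume "p = u3"
    then have "{a',u3} = {u3,cx}" using match_uniq[OF mA ap ec3, of u3] by simp
    then show False using a'c a'u(3) by (metis doubleton_eq_iff)
  qed
  have pu2: "p \<noteq> u2" using m2(1) ap unfolding miss_def by blast
  have pc: "p \<noteq> cx"
  proof
    assume "p = cx"
    then have "{a',cx} = {u3,cx}" using match_uniq[OF mA ap ec3, of cx] by simp
    then show False using a'u(3) a'c by (metis doubleton_eq_iff)
  qed
  have cu2': "u2 \<noteq> cx" using cu2 by simp
  have nearx: "z = {u2,u3} \<or> z = ea" if z: "z \<in> R" "z \<noteq> {u1,u2}" "near E {u1,u2} z" for z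
  proof -
    have touch: "z = {u2,u3}" if "u1 \<in> z \<or> u2 \<in> z \<or> u3 \<in> z"
    proof -
      have "u1 \<in> z \<or> u2 \<in> z \<or> u3 \<in> z \<longrightarrow> z = {u1,u2} \<or> z = {u2,u3}"
        using loc z(1) unfolding R_def by (rule bspec)
      then have "z = {u1,u2} \<or> z = {u2,u3}" using that by (rule mp)
      then show ?thesis using z(2) by simp
    qed
    from z(3) show ?thesis unfolding near_def
    proof (elim disjE bexE conjE)
      assume "{u1,u2} \<inter> z \<noteq> {}"
      then have "u1 \<in> z \<or> u2 \<in> z \<or> u3 \<in> z" by auto
      then show ?thesis by (rule disjI1[OF touch])
    next
      fix g assume g: "g \<in> E" "g \<inter> {u1,u2} \<noteq> {}" "g \<inter> z \<noteq> {}"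
      have "u1 \<in> g \<or> u2 \<in> g" using g(2) by auto
      then have "g \<in> {{u1,u2},{u1,a},{u1,b}} \<or> g \<in> {{u1,u2},{u2,u3}}"
        using at1 at2 g(1) by (metis (no_types, lifting) mem_Collect_eq)
      then consider "g = {u1,u2}" | "g = {u1,a}" | "g = {u1,b}" | "g = {u2,u3}" by auto
      then show ?thesis
      proof cases
        case 1
        then have "u1 \<in> z \<or> u2 \<in> z \<or> u3 \<in> z" using g(3) by auto
        then show ?thesis by (rule disjI1[OF touch])
      next
        case 2 then have "u1 \<in> z \<or> a \<in> z" using g(3) by auto
        then show ?thesis
        proof
          assume "u1 \<in> z" then show ?thesis using disjI1[OF touch] by simp
        next
          assume "a \<in> z" then show ?thesis using Runiq_a z(1) by simp
        qed
      next
        case 3 then have "u1 \<in> z \<or> b \<in> z" using g(3) by auto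
        then show ?thesis
        proof
          assume "u1 \<in> z" then show ?thesis using disjI1[OF touch] by simp
        next
          assume "b \<in> z" then show ?thesis using nRb z(1) unfolding R_def by simp
        qed
      next
        case 4
        then have "u1 \<in> z \<or> u2 \<in> z \<or> u3 \<in> z" using g(3) by auto
        then show ?thesis by (rule disjI1[OF touch])
      qed
    qed
  qed
  have Hnb: "z \<in> R \<and> z \<noteq> {u1,u2} \<and> near E {u1,u2} z"
    if "H_adj E A B {u1,u2} z \<or> H_adj E A B z {u1,u2}" for z
    using that H_adj_near[of E A B] near_sym unfolding R_def by metis
  obtain z1 z2 where zz: "z1 \<in> set xs" "z2 \<in> set xs" "z1 \<noteq> z2" "z1 \<noteq> {u1,u2}" "z2 \<noteq> {u1,u2}"
    "H_adj E A B {u1,u2} z1" "H_adj E A B z2 {u1,u2}"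
    using cycle_nbrs[OF cyc] by blast
  have "z1 = {u2,u3} \<or> z1 = ea" using nearx Hnb zz(6) by blast
  moreover have "z2 = {u2,u3} \<or> z2 = ea" using nearx Hnb zz(7) by blast
  ultimately have eaxs: "ea \<in> set xs" using zz by metis
  obtain w1 w2 where ww: "w1 \<noteq> w2" "w1 \<noteq> ea" "w2 \<noteq> ea"
    "H_adj E A B ea w1" "H_adj E A B w2 ea"
    using cycle_nbrs[OF cyc(1) eaxs] by blast
  obtain g where g: "g \<in> R" "g \<noteq> ea" "g \<noteq> {u1,u2}" "near E ea g"
  proof (cases "w1 = {u1,u2}")
    case True
    then have "w2 \<noteq> {u1,u2}" using ww by simp
    then show ?thesis using that ww(3,5) H_adj_near[OF ww(5)] near_sym unfolding R_def by metis
  next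
    case False
    then show ?thesis using that ww(2,4) H_adj_near[OF ww(4)] unfolding R_def by metis
  qed
  have gpq: "p \<in> g \<or> q \<in> g"
  proof -
    have ga: "a \<notin> g" "a' \<notin> g" using Runiq_a Runiq_a' g(1,2) by metis+
    have gea: "ea \<inter> g = {}" using ga a'(1) by auto
    from g(4) show ?thesis unfolding near_def
    proof (elim disjE bexE conjE)
      assume "ea \<inter> g \<noteq> {}" then show ?thesis using gea by simp
    next
      fix h assume h: "h \<in> E" "h \<inter> ea \<noteq> {}" "h \<inter> g \<noteq> {}"
      have "a \<in> h \<or> a' \<in> h" using h(2) a'(1) by auto
      then have "h \<in> {{u1,a},ea} \<or> h \<in> {ea,{a',p},{a',q}}"
        using ata ata' h(1) by (metis (no_types, lifting) mem_Collect_eq)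
      then consider "h = {u1,a}" | "h = ea" | "h = {a',p}" | "h = {a',q}" by auto
      then show ?thesis
      proof cases
        case 1
        then have "u1 \<in> g" using h(3) ga by auto
        have "u1 \<in> g \<or> u2 \<in> g \<or> u3 \<in> g \<longrightarrow> g = {u1,u2} \<or> g = {u2,u3}"
          using loc g(1) unfolding R_def by (rule bspec)
        then have "g = {u1,u2} \<or> g = {u2,u3}" using \<open>u1 \<in> g\<close> by simp
        then show ?thesis using g(3) \<open>u1 \<in> g\<close> u12 u13 by auto
      next
        case 2 then show ?thesis using h(3) gea by simp
      next
        case 3 then show ?thesis using h(3) ga by auto
      next
        case 4 then show ?thesis using h(3) ga by auto
      qed
    qed
  qed
  define A1 where "A1 = insert {u1,u2} (A - {{u1,a}})"
  have mA1: "matching E A1"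
    unfolding matching_def
  proof (intro conjI ballI impI)
    show "A1 \<subseteq> E" unfolding A1_def using AE xE by blast
  next
    have dis: "{u1,u2} \<inter> f = {}" if "f \<in> A - {{u1,a}}" for f
    proof -
      have "u1 \<notin> f" using match_uniq[OF mA, of f "{u1,a}" u1] that ea1 by auto
      moreover have "u2 \<notin> f" using m2(1) that unfolding miss_def by blast
      ultimately show ?thesis by blast
    qed
    fix e f assume "e \<in> A1" "f \<in> A1" "e \<noteq> f"
    then consider "e = {u1,u2}" "f \<in> A - {{u1,a}}" | "f = {u1,u2}" "e \<in> A - {{u1,a}}"
      | "e \<in> A" "f \<in> A" unfolding A1_def by blast
    then show "e \<inter> f = {}"
    proof cases
      case 1 then show ?thesis using dis by blast
    next
      case 2 then show ?thesis using dis by blast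
    next
      case 3 then show ?thesis using mA \<open>e \<noteq> f\<close> unfolding matching_def by blast
    qed
  qed
  have dA1: "A1 \<inter> B = {}" unfolding A1_def using d xE by blast
  have UA1: "A1 \<union> B = insert {u1,u2} ((A \<union> B) - {{u1,a}})" unfolding A1_def using ea1 nAB by blast
  have finS: "finite (A \<union> B)" using AE BE finSub by simp
  have ck1: "card (A1 \<union> B) = k"
  proof -
    have "{u1,u2} \<notin> (A \<union> B) - {{u1,a}}" using xE by blast
    then have "card (A1 \<union> B) = card ((A \<union> B) - {{u1,a}}) + 1" unfolding UA1 using finS by simp
    moreover have "card ((A \<union> B) - {{u1,a}}) = card (A \<union> B) - 1" using finS ea1 by simp
    moreover have "card (A \<union> B) \<ge> 1" using finS ea1 by (metis One_nat_def Suc_leI UnI1 card_gt_0_iff empty_iff)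
    ultimately show ?thesis using ck by simp
  qed
  define R0 where "R0 = R - {{u1,u2},{u2,u3}}"
  have nR0: "v \<notin> \<Union>R0" if "v \<in> {u1,u2,u3}" for v
  proof
    assume "v \<in> \<Union>R0"
    then obtain e where "e \<in> R0" "v \<in> e" by blast
    then show False using loc that unfolding R0_def R_def by blast
  qed
  have R0E: "R0 \<subseteq> E" using RE unfolding R0_def by blast
  have fR0: "finite R0" "\<forall>e\<in>R0. finite e" using R0E finSub finSube by auto
  have eaR0: "ea \<in> R0" unfolding R0_def using Ra eaxy R_def by blast
  have R1eq: "rem_edges E A1 B = insert {u2,u3} (insert {u1,a} R0)"
  proof (rule set_eqI)
    fix e
    show "e \<in> rem_edges E A1 B \<longleftrightarrow> e \<in> insert {u2,u3} (insert {u1,a} R0)"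
    proof
      assume "e \<in> rem_edges E A1 B"
      then have e: "e \<in> E" "e \<notin> A1 \<union> B" by (auto simp: rem_edges_def)
      show "e \<in> insert {u2,u3} (insert {u1,a} R0)"
      proof (cases "e = {u1,a} \<or> e = {u2,u3}")
        case True then show ?thesis by blast
      next
        case False
        then have "e \<notin> A \<union> B" "e \<noteq> {u1,u2}" using e(2) unfolding UA1 by blast+
        then show ?thesis using e(1) False unfolding R0_def R_def rem_edges_def by blast
      qed
    next
      assume "e \<in> insert {u2,u3} (insert {u1,a} R0)"
      then consider "e = {u2,u3}" | "e = {u1,a}" | "e \<in> R0" by blast
      then show "e \<in> rem_edges E A1 B"
      proof cases
        case 1
        have "{u2,u3} \<noteq> {u1,u2}" using u13 u23 by (metis doubleton_eq_iff)
        then show ?thesis using 1 yE unfolding rem_edges_def UA1 by blast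
      next
        case 2
        have "{u1,a} \<noteq> {u1,u2}" using au2 by (metis doubleton_eq_iff)
        then show ?thesis using 2 ea1E(1) ea1 nAB unfolding rem_edges_def UA1 by blast
      next
        case 3
        then have "e \<in> E" "e \<notin> A \<union> B" "e \<noteq> {u1,u2}" unfolding R0_def R_def rem_edges_def by blast+
        then show ?thesis unfolding rem_edges_def UA1 by blast
      qed
    qed
  qed
  have RR0: "R = insert {u1,u2} (insert {u2,u3} R0)" unfolding R0_def using x y R_def by blast
  have nc: "ncomp R = ncomp R0 + 1"
    unfolding RR0 using ncomp_P3[OF fR0 u12 u23 u13] nR0 by simp
  have nc1: "ncomp (rem_edges E A1 B) = ncomp R0 + 1"
  proof -
    have "u1 \<notin> \<Union>R0" "a \<in> \<Union>R0" using nR0 eaR0 Ra(2) by auto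
    then have a1: "ncomp (insert {u1,a} R0) = ncomp R0" using ncomp_pend[OF fR0] by blast
    have h1: "u2 \<notin> \<Union>(insert {u1,a} R0)" "u3 \<notin> \<Union>(insert {u1,a} R0)"
      using nR0 u12 au2 u13 au3 by auto
    have h2: "finite (insert {u1,a} R0)" "\<forall>e\<in>insert {u1,a} R0. finite e" using fR0 by auto
    have "ncomp (insert {u2,u3} (insert {u1,a} R0)) = ncomp (insert {u1,a} R0) + 1"
      by (rule ncomp_iso[OF h2 u23 h1])
    then show ?thesis unfolding R1eq using a1 by simp
  qed
  have cle1: "rem_ncomp E A1 B \<le> c" using cle nc nc1 unfolding rem_ncomp_eq R_def by simp
  (* the P3 u1 - a - a' in the new configuration *)
  have R1mem: "e \<in> R \<Longrightarrow> e \<noteq> {u1,u2} \<Longrightarrow> e \<in> rem_edges E A1 B" for e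
    unfolding R1eq R0_def by blast
  have e1: "{u1,a} \<in> rem_edges E A1 B" unfolding R1eq by blast
  have e2: "{a,a'} \<in> rem_edges E A1 B" using R1mem[of ea] Ra eaxy a'(1) R_def by blast
  have loc1: "\<forall>e\<in>rem_edges E A1 B. u1 \<in> e \<or> a \<in> e \<or> a' \<in> e \<longrightarrow> e = {u1,a} \<or> e = {a,a'}"
  proof (intro ballI impI)
    fix e assume e: "e \<in> rem_edges E A1 B" "u1 \<in> e \<or> a \<in> e \<or> a' \<in> e"
    show "e = {u1,a} \<or> e = {a,a'}"
    proof (cases "e = {u1,a}")
      case True then show ?thesis by simp
    next
      case False
      then have "e = {u2,u3} \<or> e \<in> R0" using e(1) unfolding R1eq by simp
      moreover have "{u2,u3} \<noteq> {u1,u2}" using u13 u23 by (metis doubleton_eq_iff)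
      ultimately have eR: "e \<in> R" "e \<noteq> {u1,u2}"
        using y unfolding R0_def R_def by auto
      consider "u1 \<in> e" | "a \<in> e" | "a' \<in> e" using e(2) by blast
      then show ?thesis
      proof cases
        case 1
        have "u1 \<in> e \<or> u2 \<in> e \<or> u3 \<in> e \<longrightarrow> e = {u1,u2} \<or> e = {u2,u3}"
          using loc eR(1) unfolding R_def by (rule bspec)
        then have "e = {u2,u3}" using 1 eR(2) by simp
        then show ?thesis using 1 u12 u13 by simp
      next
        case 2 then show ?thesis using Runiq_a eR a'(1) by simp
      next
        case 3 then show ?thesis using Runiq_a' eR a'(1) by simp
      qed
    qed
  qed
  have m2a: "miss A1 a" "miss B a"
  proof -
    show "miss B a" by (rule missBa)
    show "miss A1 a"
      unfolding miss_def A1_def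
    proof (intro ballI notI)
      fix e assume "e \<in> insert {u1,u2} (A - {{u1,a}})" "a \<in> e"
      then consider "e = {u1,u2}" | "e \<in> A" "e \<noteq> {u1,a}" by blast
      then show False
      proof cases
        case 1 then show False using \<open>a \<in> e\<close> au1 au2 by blast
      next
        case 2 then show False using match_uniq[OF mA _ ea1, of e a] \<open>a \<in> e\<close> by simp
      qed
    qed
  qed
  have w1: "{u1,u2} \<in> A1" unfolding A1_def by simp
  have Rw1: "\<exists>e\<in>rem_edges E A1 B. u2 \<in> e" unfolding R1eq by blast
  have u1a': "u1 \<noteq> a'" using a'u by simp
  have gR1: "g \<in> rem_edges E A1 B" using R1mem g by blast
  show False
  proof (cases "q \<in> g")
    case True
    show False
      apply (rule core_diff[OF mA1 mB dA1 ck1 cle1 e1 e2 u1a' loc1 m2a w1 aq Rw1])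
      using gR1 True apply blast
      using a'u qu1 by auto
  next
    case False
    then have pg: "p \<in> g" using gpq by simp
    have ap1: "{a',p} \<in> A1"
    proof -
      have "{a',p} \<noteq> {u1,a}" using a'u(1) a'(2) by (metis doubleton_eq_iff)
      then show ?thesis unfolding A1_def using ap by blast
    qed
    have nr: "\<not> reach (A1 \<union> B) u1 a'"
    proof
      assume r: "reach (A1 \<union> B) u1 a'"
      define F1 where "F1 = A1 \<union> B"
      have xF1: "{u1,u2} \<in> F1" unfolding F1_def A1_def by simp
      have gF: "g \<notin> F1" using g(1,3) RAB unfolding F1_def UA1 by blast
      have atp: "{e\<in>E. p\<in>e} = {{a',p},g}"
      proof -
        have s: "{{a',p},g} \<subseteq> {e\<in>E. p\<in>e}" using apE pg g(1) RE by auto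
        have "{a',p} \<noteq> g" using ap g(1) RAB by metis
        then have "card {{a',p},g} = 2" by simp
        then show ?thesis using at_eq[OF s] dp by simp
      qed
      have F1E: "F1 \<subseteq> E" unfolding F1_def using mA1 mB by (auto simp: matching_def)
      have g2: "{e\<in>A1 \<union> B. u2\<in>e} = {{u1,u2}}"
        using at2 F1E yE xF1 unfolding F1_def UA1 by blast
      have gc: "{e\<in>A1 \<union> B. cx\<in>e} = {{u3,cx}}"
      proof -
        have "{u3,cx} \<noteq> {u1,a}" using u13 cu1 by (metis doubleton_eq_iff)
        then have "{u3,cx} \<in> A1 \<union> B" unfolding UA1 using ec3 by blast
        moreover have "ec \<notin> A1 \<union> B"
        proof -
          have "ec \<noteq> {u1,u2}" using Rc(2) cu1 cu2 by blast
          then show ?thesis unfolding UA1 using ecE by blast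
        qed
        ultimately show ?thesis using atc F1E unfolding F1_def by blast
      qed
      have gp: "{e\<in>A1 \<union> B. p\<in>e} = {{a',p}}" using atp F1E gF ap1 unfolding F1_def by blast
      have rcu: "reach F1 u2 cx"
      proof -
        have "reach F1 u2 u1" using xF1 by (metis insert_commute reach_edge)
        moreover have "reach F1 u1 u3"
        proof -
          have la: "{e\<in>F. a\<in>e} = {{a,u1}}" using atFa by (simp add: insert_commute)
          have "reach F a u3" using reach_trans[OF reach_sym[OF reach_edge[of u1 a F]] r13[folded F_def]]
            ea1 unfolding F_def by (metis UnI1)
          then have "u3 = a \<or> reach (F - {{a,u1}}) u1 u3" using reach_leaf[OF la] by blast
          then have rr: "reach (F - {{a,u1}}) u1 u3" using au3 by simp
          have ss: "F - {{a,u1}} \<subseteq> F1" unfolding F_def F1_def UA1 by (auto simp: insert_commute)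
          show ?thesis by (rule reach_mono[OF ss rr])
        qed
        moreover have "reach F1 u3 cx" using gc unfolding F1_def by (metis (no_types, lifting) mem_Collect_eq singletonI reach_edge)
        ultimately show ?thesis using reach_trans by metis
      qed
      have rpu: "reach F1 u2 p"
      proof -
        have "reach F1 u2 u1" using xF1 by (metis insert_commute reach_edge)
        moreover have "reach F1 u1 a'" using r unfolding F1_def .
        moreover have "reach F1 a' p" using ap1 unfolding F1_def by (metis UnI1 reach_edge)
        ultimately show ?thesis using reach_trans by metis
      qed
      show False
        using three_ends_AB[OF mA1 mB g2 gc gp cu2' pu2[symmetric] pc[symmetric]] rcu rpu
        unfolding F1_def by blast
    qed
    show False
      apply (rule core_same[OF mA1 mB dA1 ck1 cle1 e1 e2 u1a' loc1 m2a w1 ap1 Rw1])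
      using gR1 pg apply blast
      using a'u pu1 nr by auto
  qed
qed

end

lemma H_adj_sym_AB: "H_adj E B A = H_adj E A B"
  by (simp add: H_adj_def rem_sym[of E B A] fun_eq_iff)

lemma rem_ncomp_sym: "rem_ncomp E B A = rem_ncomp E A B"
  by (simp add: rem_ncomp_def rem_sym[of E B A])

context LG begin

lemma augment_A:
  assumes mA: "matching E A" and mB: "matching E B" and d: "A \<inter> B = {}" and ck: "card (A \<union> B) = k"
    and xy: "{x,y} \<in> rem_edges E A B" and mx: "miss A x" and my: "miss A y"
  shows False
proof -
  have "B \<inter> A = {}" "card (B \<union> A) = k" "{x,y} \<in> rem_edges E B A"
    using d ck xy rem_sym[of E A B] by (auto simp: Un_commute)
  then show False using augment[OF mB mA _ _ _ mx my] by blast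
qed

lemma end_struct:
  assumes mA: "matching E A" and mB: "matching E B" and d: "A \<inter> B = {}"
    and um: "{u,m} \<in> rem_edges E A B" and ua: "{u,a} \<in> A" and ub: "{u,b} \<in> B"
  shows "{e\<in>E. u\<in>e} = {{u,m},{u,a},{u,b}}" "degree E u = 3" "degree E a = 2" "degree E b = 2"
proof -
  have AE: "A \<subseteq> E" and BE: "B \<subseteq> E" using mA mB by (auto simp: matching_def)
  have umE: "{u,m} \<in> E" "{u,m} \<notin> A" "{u,m} \<notin> B" using um by (auto simp: rem_edges_def)
  have ne: "{u,m} \<noteq> {u,a}" "{u,m} \<noteq> {u,b}" "{u,a} \<noteq> {u,b}"
    using umE ua ub d by (metis disjoint_iff)+
  have s: "{{u,m},{u,a},{u,b}} \<subseteq> {e\<in>E. u\<in>e}" using umE ua ub AE BE by auto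
  have c3: "card {{u,m},{u,a},{u,b}} = 3" using ne by simp
  show d3: "degree E u = 3" using deg_ge[OF s] c3 deg_le3[OF umE(1), of u] by simp
  show "{e\<in>E. u\<in>e} = {{u,m},{u,a},{u,b}}" using at_eq[OF s] c3 d3 by simp
  show "degree E a = 2" using nbr3_deg2[OF _ d3] ua AE by blast
  show "degree E b = 2" using nbr3_deg2[OF _ d3] ub BE by blast
qed

lemma near_side:
  assumes loc: "\<forall>e\<in>rem_edges E A B. u1 \<in> e \<or> u2 \<in> e \<or> u3 \<in> e \<longrightarrow> e = {u1,u2} \<or> e = {u2,u3}"
    and at2: "{e\<in>E. u2\<in>e} = {{u1,u2},{u2,u3}}"
    and u: "u = u1 \<or> u = u3"
    and atu: "{e\<in>E. u\<in>e} = {{u,u2},{u,a},{u,b}}"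
    and z: "z \<in> rem_edges E A B" "near E {u,u2} z"
  shows "z = {u1,u2} \<or> z = {u2,u3} \<or> a \<in> z \<or> b \<in> z"
proof -
  have touch: "z = {u1,u2} \<or> z = {u2,u3}" if "u1 \<in> z \<or> u2 \<in> z \<or> u3 \<in> z"
  proof -
    have "u1 \<in> z \<or> u2 \<in> z \<or> u3 \<in> z \<longrightarrow> z = {u1,u2} \<or> z = {u2,u3}"
      using loc z(1) by (rule bspec)
    then show ?thesis using that by (rule mp)
  qed
  from z(2) show ?thesis unfolding near_def
  proof (elim disjE bexE conjE)
    assume "{u,u2} \<inter> z \<noteq> {}"
    then have "u1 \<in> z \<or> u2 \<in> z \<or> u3 \<in> z" using u by auto
    then show ?thesis using touch by auto
  next
    fix g assume g: "g \<in> E" "g \<inter> {u,u2} \<noteq> {}" "g \<inter> z \<noteq> {}"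
    have "u \<in> g \<or> u2 \<in> g" using g(2) by auto
    then have "g \<in> {{u,u2},{u,a},{u,b}} \<or> g \<in> {{u1,u2},{u2,u3}}"
      using atu at2 g(1) by (metis (no_types, lifting) mem_Collect_eq)
    then consider "g = {u,u2}" | "g = {u,a}" | "g = {u,b}" | "g = {u1,u2}" | "g = {u2,u3}" by auto
    then show ?thesis
    proof cases
      case 1
      then have "u1 \<in> z \<or> u2 \<in> z \<or> u3 \<in> z" using g(3) u by auto
      then show ?thesis using touch by auto
    next
      case 2 then have "u \<in> z \<or> a \<in> z" using g(3) by auto
      then show ?thesis using touch u by auto
    next
      case 3 then have "u \<in> z \<or> b \<in> z" using g(3) by auto
      then show ?thesis using touch u by auto
    next
      case 4
      then have "u1 \<in> z \<or> u2 \<in> z \<or> u3 \<in> z" using g(3) by auto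
      then show ?thesis using touch by auto
    next
      case 5
      then have "u1 \<in> z \<or> u2 \<in> z \<or> u3 \<in> z" using g(3) by auto
      then show ?thesis using touch by auto
    qed
  qed
qed

lemma caseA:
  assumes mA: "matching E A" and mB: "matching E B" and d: "A \<inter> B = {}" and ck: "card (A \<union> B) = k"
    and cle: "rem_ncomp E A B \<le> c"
    and x: "{u1,u2} \<in> rem_edges E A B" and y: "{u2,u3} \<in> rem_edges E A B" and u13: "u1 \<noteq> u3"
    and loc: "\<forall>e\<in>rem_edges E A B. u1 \<in> e \<or> u2 \<in> e \<or> u3 \<in> e \<longrightarrow> e = {u1,u2} \<or> e = {u2,u3}"
    and at2: "{e\<in>E. u2\<in>e} = {{u1,u2},{u2,u3}}"
    and cyc: "is_cycle (H_adj E A B) xs" "{u1,u2} \<in> set xs" "{u2,u3} \<in> set xs"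
  shows False
proof -
  define R where "R = rem_edges E A B"
  have AE: "A \<subseteq> E" and BE: "B \<subseteq> E" using mA mB by (auto simp: matching_def)
  have xE: "{u1,u2} \<in> E" "{u1,u2} \<notin> A" "{u1,u2} \<notin> B" using x by (auto simp: rem_edges_def)
  have yE: "{u2,u3} \<in> E" "{u2,u3} \<notin> A" "{u2,u3} \<notin> B" using y by (auto simp: rem_edges_def)
  have u12: "u1 \<noteq> u2" using edge_ne xE(1) by blast
  have u23: "u2 \<noteq> u3" using edge_ne yE(1) by blast
  have m2g: "e \<notin> A \<and> e \<notin> B" if "e \<in> E" "u2 \<in> e" for e
  proof -
    have "e \<in> {{u1,u2},{u2,u3}}" using at2 that by (metis (no_types, lifting) mem_Collect_eq)
    then show ?thesis using xE yE by auto
  qed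
  have m2: "miss A u2" "miss B u2"
    unfolding miss_def using m2g AE BE by (meson subsetD)+
  have x': "{u2,u1} \<in> rem_edges E A B" "{u3,u2} \<in> rem_edges E A B"
    using x y by (simp_all add: insert_commute)
  have getA: "\<exists>w. {u,w} \<in> A" if "{u,u2} \<in> rem_edges E A B" for u
  proof -
    have "\<not> miss A u" using augment_A[OF mA mB d ck that _ m2(1)] by blast
    then obtain e where "e \<in> A" "u \<in> e" unfolding miss_def by blast
    then show ?thesis using two_edge AE by blast
  qed
  have getB: "\<exists>w. {u,w} \<in> B" if "{u,u2} \<in> rem_edges E A B" for u
  proof -
    have "\<not> miss B u" using augment[OF mA mB d ck that _ m2(2)] by blast
    then obtain e where "e \<in> B" "u \<in> e" unfolding miss_def by blast
    then show ?thesis using two_edge BE by blast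
  qed
  obtain a where ea1: "{u1,a} \<in> A" using getA[OF x] by blast
  obtain b where eb1: "{u1,b} \<in> B" using getB[OF x] by blast
  obtain cv where ec3: "{u3,cv} \<in> A" using getA[OF x'(2)] by blast
  obtain dv where ed3: "{u3,dv} \<in> B" using getB[OF x'(2)] by blast
  note s1 = end_struct[OF mA mB d x ea1 eb1]
  note s3 = end_struct[OF mA mB d x'(2) ec3 ed3]
  have au3: "a \<noteq> u3" "b \<noteq> u3" using s1(3) s1(4) s3(2) by (metis numeral_eq_iff semiring_norm(89))+
  have cu1: "cv \<noteq> u1" "dv \<noteq> u1" using s3(3) s3(4) s1(2) by (metis numeral_eq_iff semiring_norm(89))+
  have at1: "{e\<in>E. u1\<in>e} = {{u1,u2},{u1,a},{u1,b}}" using s1(1) .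
  have at3: "{e\<in>E. u3\<in>e} = {{u3,u2},{u3,cv},{u3,dv}}" using s3(1) .
  have RaRb: "(\<exists>e\<in>R. a \<in> e) \<or> (\<exists>e\<in>R. b \<in> e)"
  proof -
    obtain z1 z2 where zz: "z1 \<noteq> z2" "z1 \<noteq> {u1,u2}" "z2 \<noteq> {u1,u2}"
      "H_adj E A B {u1,u2} z1" "H_adj E A B z2 {u1,u2}"
      using cycle_nbrs[OF cyc(1,2)] by blast
    have n1: "z1 \<in> R" "near E {u1,u2} z1" using H_adj_near[OF zz(4)] unfolding R_def by auto
    have n2: "z2 \<in> R" "near E {u1,u2} z2" using H_adj_near[OF zz(5)] near_sym unfolding R_def by auto
    have "z1 = {u1,u2} \<or> z1 = {u2,u3} \<or> a \<in> z1 \<or> b \<in> z1"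
      using near_side[OF loc at2 _ at1] n1 unfolding R_def by blast
    moreover have "z2 = {u1,u2} \<or> z2 = {u2,u3} \<or> a \<in> z2 \<or> b \<in> z2"
      using near_side[OF loc at2 _ at1] n2 unfolding R_def by blast
    ultimately show ?thesis using zz(1-3) n1(1) n2(1) by metis
  qed
  have RcRd: "(\<exists>e\<in>R. cv \<in> e) \<or> (\<exists>e\<in>R. dv \<in> e)"
  proof -
    obtain z1 z2 where zz: "z1 \<noteq> z2" "z1 \<noteq> {u2,u3}" "z2 \<noteq> {u2,u3}"
      "H_adj E A B {u2,u3} z1" "H_adj E A B z2 {u2,u3}"
      using cycle_nbrs[OF cyc(1,3)] by blast
    have yy: "{u3,u2} = {u2,u3}" by (simp add: insert_commute)
    have n1: "z1 \<in> R" "near E {u3,u2} z1" using H_adj_near[OF zz(4)] yy unfolding R_def by auto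
    have n2: "z2 \<in> R" "near E {u3,u2} z2" using H_adj_near[OF zz(5)] near_sym yy unfolding R_def by auto
    have "z1 = {u1,u2} \<or> z1 = {u2,u3} \<or> cv \<in> z1 \<or> dv \<in> z1"
      using near_side[OF loc at2 _ at3] n1 unfolding R_def by blast
    moreover have "z2 = {u1,u2} \<or> z2 = {u2,u3} \<or> cv \<in> z2 \<or> dv \<in> z2"
      using near_side[OF loc at2 _ at3] n2 unfolding R_def by blast
    ultimately show ?thesis using zz(1-3) n1(1) n2(1) by metis
  qed
  have dBA: "B \<inter> A = {}" using d by blast
  have ckBA: "card (B \<union> A) = k" using ck by (simp add: Un_commute)
  have cleBA: "rem_ncomp E B A \<le> c" using cle by (simp add: rem_ncomp_sym)
  have remBA: "rem_edges E B A = rem_edges E A B" by (rule rem_sym)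
  have locBA: "\<forall>e\<in>rem_edges E B A. u1 \<in> e \<or> u2 \<in> e \<or> u3 \<in> e \<longrightarrow> e = {u1,u2} \<or> e = {u2,u3}"
    using loc remBA by simp
  have xBA: "{u1,u2} \<in> rem_edges E B A" "{u2,u3} \<in> rem_edges E B A" using x y remBA by simp_all
  have case_ad: False if Ra: "\<exists>e\<in>R. a \<in> e" and Rd: "\<exists>e\<in>R. dv \<in> e"
    by (rule core_diff[OF mA mB d ck cle x y u13 loc m2 ea1 ed3])
       (use Ra Rd au3 cu1 in \<open>simp_all add: R_def\<close>)
  have case_bc: False if Rb: "\<exists>e\<in>R. b \<in> e" and Rc: "\<exists>e\<in>R. cv \<in> e"
    by (rule core_diff[OF mB mA dBA ckBA cleBA xBA u13 locBA m2(2) m2(1) eb1 ec3])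
       (use Rb Rc au3 cu1 remBA in \<open>simp_all add: R_def\<close>)
  show False
  proof (cases "\<exists>e\<in>R. a \<in> e")
    case Ra: True
    show False
    proof (cases "\<exists>e\<in>R. dv \<in> e")
      case True then show False using case_ad Ra by blast
    next
      case nRd: False
      then have Rc: "\<exists>e\<in>R. cv \<in> e" using RcRd by blast
      show False
      proof (cases "\<exists>e\<in>R. b \<in> e")
        case True then show False using case_bc Rc by blast
      next
        case nRb: False
        show False
        proof (cases "reach (A \<union> B) u1 u3")
          case True
          obtain ea where ea: "ea \<in> R" "a \<in> ea" using Ra by blast
          obtain ec where ec: "ec \<in> R" "cv \<in> ec" using Rc by blast
          show False
            by (rule caseA_same[OF mA mB d ck cle x y u13 loc at2 m2 ea1 eb1 ec3 ed3 _ _ _ _ _ _ True cyc(1,2)])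
               (use ea ec nRb nRd in \<open>auto simp: R_def\<close>)
        next
          case False
          show False
            by (rule core_same[OF mA mB d ck cle x y u13 loc m2 ea1 ec3 _ _ _ _ False])
               (use Ra Rc au3 cu1 in \<open>simp_all add: R_def\<close>)
        qed
      qed
    qed
  next
    case nRa: False
    then have Rb: "\<exists>e\<in>R. b \<in> e" using RaRb by blast
    show False
    proof (cases "\<exists>e\<in>R. cv \<in> e")
      case True then show False using case_bc Rb by blast
    next
      case nRc: False
      then have Rd: "\<exists>e\<in>R. dv \<in> e" using RcRd by blast
      show False
      proof (cases "reach (B \<union> A) u1 u3")
        case True
        obtain eb where eb: "eb \<in> R" "b \<in> eb" using Rb by blast
        obtain ed where ed: "ed \<in> R" "dv \<in> ed" using Rd by blast
        have cycBA: "is_cycle (H_adj E B A) xs" using cyc(1) by (simp add: H_adj_sym_AB)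
        show False
          by (rule caseA_same[OF mB mA dBA ckBA cleBA xBA u13 locBA at2 m2(2) m2(1) eb1 ea1 ed3 ec3 _ _ _ _ _ _ True cycBA cyc(2)])
             (use eb ed nRa nRc remBA in \<open>auto simp: R_def\<close>)
      next
        case False
        show False
          by (rule core_same[OF mB mA dBA ckBA cleBA xBA u13 locBA m2(2) m2(1) eb1 ed3 _ _ _ _ False])
             (use Rb Rd au3 cu1 remBA in \<open>simp_all add: R_def\<close>)
      qed
    qed
  qed
qed

end

lemma loc_from_comp:
  assumes two: "\<forall>e\<in>R. card e = 2"
    and comp: "{u1, u2, u3} \<in> components (\<Union>R) R"
    and n13: "{u1, u3} \<notin> R"
  shows "\<forall>e\<in>R. u1 \<in> e \<or> u2 \<in> e \<or> u3 \<in> e \<longrightarrow> e = {u1,u2} \<or> e = {u2,u3}"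
proof (intro ballI impI)
  fix e assume e: "e \<in> R" "u1 \<in> e \<or> u2 \<in> e \<or> u3 \<in> e"
  obtain w where w: "{u1,u2,u3} = {v\<in>\<Union>R. reach R w v}" using comp unfolding components_def by blast
  have inC: "z \<in> {u1,u2,u3}" if "reach R u z" "u \<in> {u1,u2,u3}" "z \<in> \<Union>R" for u z
  proof -
    have "reach R w u" using that(2) w by blast
    then have "reach R w z" using that(1) by (rule reach_trans)
    then show ?thesis using w that(3) by blast
  qed
  obtain p q where pq: "e = {p,q}" "p \<noteq> q" using two e(1) by (meson card_2_iff)
  have "p \<in> {u1,u2,u3} \<or> q \<in> {u1,u2,u3}" using e(2) pq by auto
  moreover have "reach R p q" "reach R q p" using e(1) pq reach_edge reach_sym by metis+
  moreover have "p \<in> \<Union>R" "q \<in> \<Union>R" using e(1) pq by auto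
  ultimately have "p \<in> {u1,u2,u3}" "q \<in> {u1,u2,u3}" using inC by blast+
  then show "e = {u1,u2} \<or> e = {u2,u3}"
    using pq e(1) n13 by (auto simp: insert_commute)
qed

theorem lemma4:
  fixes V :: "'a set" and E M1 M2 :: "'a set set" and u1 u2 u3 :: 'a
  assumes G: "simple_graph V E"
    and conn: "connected_graph V E"
    and maxdeg: "\<forall>v\<in>V. degree E v \<le> 3"
    and mindeg: "\<forall>v\<in>V. degree E v \<ge> 2"
    and no33: "\<forall>u v. {u, v} \<in> E \<longrightarrow> \<not> (degree E u = 3 \<and> degree E v = 3)"
    and M1: "matching E M1" and M2: "matching E M2" and disj: "M1 \<inter> M2 = {}"
    and maxM: "\<forall>N1 N2. matching E N1 \<and> matching E N2 \<and> N1 \<inter> N2 = {} \<longrightarrow>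
                 card (N1 \<union> N2) \<le> card (M1 \<union> M2)"
    and minC: "\<forall>N1 N2. matching E N1 \<and> matching E N2 \<and> N1 \<inter> N2 = {} \<and>
                 card (N1 \<union> N2) = card (M1 \<union> M2) \<longrightarrow>
                 rem_ncomp E M1 M2 \<le> rem_ncomp E N1 N2"
    and dist: "u1 \<noteq> u2" "u2 \<noteq> u3" "u1 \<noteq> u3"
    and comp: "{u1, u2, u3} \<in> components (\<Union>(rem_edges E M1 M2)) (rem_edges E M1 M2)"
    and e12: "{u1, u2} \<in> rem_edges E M1 M2"
    and e23: "{u2, u3} \<in> rem_edges E M1 M2"
    and n13: "{u1, u3} \<notin> rem_edges E M1 M2"
  shows "\<not> (\<exists>xs. is_cycle (H_adj E M1 M2) xs \<and> {u1, u2} \<in> set xs \<and> {u2, u3} \<in> set xs)"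
proof
  assume "\<exists>xs. is_cycle (H_adj E M1 M2) xs \<and> {u1, u2} \<in> set xs \<and> {u2, u3} \<in> set xs"
  then obtain xs where cyc: "is_cycle (H_adj E M1 M2) xs" "{u1, u2} \<in> set xs" "{u2, u3} \<in> set xs"
    by blast
  interpret LG V E "card (M1 \<union> M2)" "rem_ncomp E M1 M2"
    by (unfold_locales) (use G maxdeg mindeg no33 maxM minC in auto)
  have ck: "card (M1 \<union> M2) = card (M1 \<union> M2)" ..
  have cle: "rem_ncomp E M1 M2 \<le> rem_ncomp E M1 M2" ..
  have two': "\<forall>e\<in>rem_edges E M1 M2. card e = 2" using two rem_sub by blast
  have loc: "\<forall>e\<in>rem_edges E M1 M2. u1 \<in> e \<or> u2 \<in> e \<or> u3 \<in> e \<longrightarrow> e = {u1,u2} \<or> e = {u2,u3}"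
    by (rule loc_from_comp[OF two' comp n13])
  have xE: "{u1,u2} \<in> E" "{u1,u2} \<notin> M1 \<union> M2" using e12 by (auto simp: rem_edges_def)
  have yE: "{u2,u3} \<in> E" "{u2,u3} \<notin> M1 \<union> M2" using e23 by (auto simp: rem_edges_def)
  have xy: "{u1,u2} \<noteq> {u2,u3}" using dist by (metis doubleton_eq_iff)
  have s2: "{{u1,u2},{u2,u3}} \<subseteq> {e\<in>E. u2\<in>e}" using xE yE by auto
  have c2: "card {{u1,u2},{u2,u3}} = 2" using xy by simp
  have dle: "degree E u2 \<le> 3" using deg_le3[OF xE(1), of u2] by simp
  have dge: "2 \<le> degree E u2" using deg_ge[OF s2] c2 by simp
  show False
  proof (cases "degree E u2 = 2")
    case True
    have at2: "{e\<in>E. u2\<in>e} = {{u1,u2},{u2,u3}}" using at_eq[OF s2] c2 True by simp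
    show False by (rule caseA[OF M1 M2 disj ck cle e12 e23 dist(3) loc at2 cyc])
  next
    case False
    then have d3: "degree E u2 = 3" using dle dge by simp
    have neq: "{e\<in>E. u2\<in>e} \<noteq> {{u1,u2},{u2,u3}}"
    proof
      assume "{e\<in>E. u2\<in>e} = {{u1,u2},{u2,u3}}"
      then have "degree E u2 = 2" using c2 unfolding degree_def by simp
      then show False using d3 by simp
    qed
    have "\<not> {e\<in>E. u2\<in>e} \<subseteq> {{u1,u2},{u2,u3}}" using neq s2 by (meson subset_antisym)
    then obtain h where h0: "h \<in> {e\<in>E. u2\<in>e}" "h \<notin> {{u1,u2},{u2,u3}}" by (meson subsetI)
    then have h: "h \<in> E" "u2 \<in> h" "h \<noteq> {u1,u2}" "h \<noteq> {u2,u3}" by simp_all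
    have "h \<notin> rem_edges E M1 M2"
    proof
      assume "h \<in> rem_edges E M1 M2"
      then have "h = {u1,u2} \<or> h = {u2,u3}" using loc h(2) by blast
      then show False using h(3,4) by simp
    qed
    then have "h \<in> M1 \<or> h \<in> M2" using h(1) by (simp add: rem_edges_def)
    then show False
    proof
      assume "h \<in> M1"
      then show False by (rule caseB[OF M1 M2 disj ck e12 e23 dist(3) _ h(2)])
    next
      assume hM2: "h \<in> M2"
      have "M2 \<inter> M1 = {}" "card (M2 \<union> M1) = card (M1 \<union> M2)" using disj by (auto simp: Un_commute)
      moreover have "{u1,u2} \<in> rem_edges E M2 M1" "{u2,u3} \<in> rem_edges E M2 M1"
        using e12 e23 rem_sym[of E M1 M2] by simp_all
      ultimately show False using caseB[OF M2 M1 _ _ _ _ dist(3) hM2 h(2)] by blast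
    qed
  qed
qed


end
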